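(* Let $\delta,D\ge0$, $(X,x,\Gamma)\in\mathcal{M}(\delta,D)$ and $Y=\mathrm{QC\text{-}Hull}(\Lambda(\Gamma))$. Then for every $r>0$ the limits $$\lim_{T\to+\infty}\frac{\log\mathrm{Cov}(\overline B(x,T)\cap Y,r)}{T}\quad\text{and}\quad\lim_{T\to+\infty}\frac{\log\mathrm{Pack}(\overline B(x,T)\cap Y,r)}{T}$$ exist, do not depend on $r$, are equal to each other, and equal $h_\Gamma$, which is finite.
   Context: For $Z$ a subset of a metric space, $\mathrm{Pack}(Z,r)$ is the maximal cardinality of a $2r$-separated subset of $Z$ (pairwise distances $>2r$), and $\mathrm{Cov}(Z,r)$ is the minimal cardinality of an $r$-dense subset $S\subseteq Z$ (every point of $Z$ within distance $\le r$ of $S$). Gromov product $(y,z)_x=\frac12(d(x,y)+d(x,z)-d(y,z))$; $X$ is $\delta$-hyperbolic if $(x,z)_w\geq\min\{(x,y)_w,(y,z)_w\}-\delta$ for all points. $\Lambda(\Gamma)$: accumulation points in the Gromov boundary of $\Gamma x$; elementary means $\#\Lambda(\Gamma)\le2$. $\mathrm{QC\text{-}Hull}(C)$: union of geodesic lines with both endpoints in $C$. Quasiconvex-cocompact with codiameter $\le D$: for all $y,y'\in\mathrm{QC\text{-}Hull}(\Lambda(\Gamma))$ there is $g\in\Gamma$ with $d(gy,y')\le D$. $\mathcal{M}(\delta,D)$: triples $(X,x,\Gamma)$, $X$ proper geodesic $\delta$-hyperbolic, $\Gamma\le\mathrm{Isom}(X)$ discrete, torsion-free, non-elementary, quasiconvex-cocompact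 with codiameter $\le D$, $x\in\mathrm{QC\text{-}Hull}(\Lambda(\Gamma))$. Critical exponent $h_\Gamma=\limsup_{T\to\infty}\frac1T\log\#(\Gamma x\cap\overline B(x,T))$. *)

theory Defs
  imports "HOL-Analysis.Analysis" "HOL-Library.Extended_Nat"
begin

text \<open>The metric space X is the whole type 'a.\<close>

definition gromov_product :: "'a::metric_space \<Rightarrow> 'a \<Rightarrow> 'a \<Rightarrow> real" where
  "gromov_product w y z = (dist w y + dist w z - dist y z) / 2"

definition proper_space_pred :: "'a::metric_space itself \<Rightarrow> bool" where
  "proper_space_pred _ \<longleftrightarrow> (\<forall>(a::'a) r. compact (cball a r))"

definition geodesic_space :: "'a::metric_space itself \<Rightarrow> bool" where
  "geodesic_space _ \<longleftrightarrow> (\<forall>(a::'a) b. \<exists>\<gamma>::real \<Rightarrow> 'a. \<gamma> 0 = a \<and> \<gamma> (dist a b) = b \<and>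
      (\<forall>s\<in>{0..dist a b}. \<forall>t\<in>{0..dist a b}. dist (\<gamma> s) (\<gamma> t) = \<bar>s - t\<bar>))"

definition gromov_hyperbolic :: "'a::metric_space itself \<Rightarrow> real \<Rightarrow> bool" where
  "gromov_hyperbolic _ \<delta> \<longleftrightarrow> (\<forall>(w::'a) x y z.
      gromov_product w x z \<ge> min (gromov_product w x y) (gromov_product w y z) - \<delta>)"

definition conv_infty :: "'a::metric_space \<Rightarrow> (nat \<Rightarrow> 'a) \<Rightarrow> bool" where
  "conv_infty x0 s \<longleftrightarrow> (\<forall>M. \<exists>N. \<forall>n\<ge>N. \<forall>m\<ge>N. gromov_product x0 (s n) (s m) \<ge> M)"

definition equiv_infty :: "'a::metric_space \<Rightarrow> (nat \<Rightarrow> 'a) \<Rightarrow> (nat \<Rightarrow> 'a) \<Rightarrow> bool" where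
  "equiv_infty x0 s t \<longleftrightarrow> (\<forall>M. \<exists>N. \<forall>n\<ge>N. \<forall>m\<ge>N. gromov_product x0 (s n) (t m) \<ge> M)"

definition gromov_boundary :: "'a::metric_space \<Rightarrow> (nat \<Rightarrow> 'a) set set" where
  "gromov_boundary x0 = {{t. conv_infty x0 t \<and> equiv_infty x0 s t} | s. conv_infty x0 s}"

definition isometry :: "('a::metric_space \<Rightarrow> 'a) \<Rightarrow> bool" where
  "isometry g \<longleftrightarrow> bij g \<and> (\<forall>a b. dist (g a) (g b) = dist a b)"

definition isom_group :: "('a::metric_space \<Rightarrow> 'a) set \<Rightarrow> bool" where
  "isom_group \<Gamma> \<longleftrightarrow> (\<forall>g\<in>\<Gamma>. isometry g) \<and> id \<in> \<Gamma> \<and>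
     (\<forall>g\<in>\<Gamma>. \<forall>h\<in>\<Gamma>. g \<circ> h \<in> \<Gamma>) \<and> (\<forall>g\<in>\<Gamma>. inv g \<in> \<Gamma>)"

definition discrete_group :: "('a::metric_space \<Rightarrow> 'a) set \<Rightarrow> bool" where
  "discrete_group \<Gamma> \<longleftrightarrow> (\<forall>a R. finite {g\<in>\<Gamma>. dist (g a) a \<le> R})"

definition torsion_free :: "('a \<Rightarrow> 'a) set \<Rightarrow> bool" where
  "torsion_free \<Gamma> \<longleftrightarrow> (\<forall>g\<in>\<Gamma>. \<forall>n::nat. n > 0 \<longrightarrow> g ^^ n = id \<longrightarrow> g = id)"

definition limit_set :: "('a::metric_space \<Rightarrow> 'a) set \<Rightarrow> 'a \<Rightarrow> (nat \<Rightarrow> 'a) set set" where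
  "limit_set \<Gamma> x = {\<xi>\<in>gromov_boundary x. \<exists>s\<in>\<xi>. \<forall>n. s n \<in> (\<lambda>g. g x) ` \<Gamma>}"

definition elementary :: "('a::metric_space \<Rightarrow> 'a) set \<Rightarrow> 'a \<Rightarrow> bool" where
  "elementary \<Gamma> x \<longleftrightarrow> finite (limit_set \<Gamma> x) \<and> card (limit_set \<Gamma> x) \<le> 2"

definition geodesic_line :: "(real \<Rightarrow> 'a::metric_space) \<Rightarrow> bool" where
  "geodesic_line \<gamma> \<longleftrightarrow> (\<forall>s t. dist (\<gamma> s) (\<gamma> t) = \<bar>s - t\<bar>)"

definition QC_Hull :: "'a::metric_space \<Rightarrow> (nat \<Rightarrow> 'a) set set \<Rightarrow> 'a set" where
  "QC_Hull x0 C = \<Union> {range \<gamma> | \<gamma>. geodesic_line \<gamma> \<and>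
      (\<exists>\<xi>\<in>C. (\<lambda>n. \<gamma> (real n)) \<in> \<xi>) \<and> (\<exists>\<eta>\<in>C. (\<lambda>n. \<gamma> (- real n)) \<in> \<eta>)}"

definition qc_cocompact :: "('a::metric_space \<Rightarrow> 'a) set \<Rightarrow> 'a \<Rightarrow> real \<Rightarrow> bool" where
  "qc_cocompact \<Gamma> x D \<longleftrightarrow> (\<forall>y\<in>QC_Hull x (limit_set \<Gamma> x). \<forall>y'\<in>QC_Hull x (limit_set \<Gamma> x).
      \<exists>g\<in>\<Gamma>. dist (g y) y' \<le> D)"

definition class_M :: "real \<Rightarrow> real \<Rightarrow> 'a::metric_space \<Rightarrow> ('a \<Rightarrow> 'a) set \<Rightarrow> bool" where
  "class_M \<delta> D x \<Gamma> \<longleftrightarrow> proper_space_pred TYPE('a) \<and> geodesic_space TYPE('a) \<and>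
     gromov_hyperbolic TYPE('a) \<delta> \<and> isom_group \<Gamma> \<and> discrete_group \<Gamma> \<and> torsion_free \<Gamma> \<and>
     \<not> elementary \<Gamma> x \<and> qc_cocompact \<Gamma> x D \<and> x \<in> QC_Hull x (limit_set \<Gamma> x)"

definition Pack :: "'a::metric_space set \<Rightarrow> real \<Rightarrow> enat" where
  "Pack Z r = (SUP S\<in>{S. S \<subseteq> Z \<and> (\<forall>a\<in>S. \<forall>b\<in>S. a \<noteq> b \<longrightarrow> dist a b > 2 * r)}.
                 (if finite S then enat (card S) else \<infinity>))"

definition Cov :: "'a::metric_space set \<Rightarrow> real \<Rightarrow> enat" where
  "Cov Z r = (INF S\<in>{S. S \<subseteq> Z \<and> (\<forall>z\<in>Z. \<exists>s\<in>S. dist z s \<le> r)}.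
                 (if finite S then enat (card S) else \<infinity>))"

definition crit_exp :: "('a::metric_space \<Rightarrow> 'a) set \<Rightarrow> 'a \<Rightarrow> ereal" where
  "crit_exp \<Gamma> x = Limsup at_top
     (\<lambda>T::real. ereal (ln (real (card ((\<lambda>g. g x) ` \<Gamma> \<inter> cball x T))) / T))"

end

theory Submission
  imports Defs "HOL-Library.Diagonal_Subsequence" "HOL-Library.Countable"
begin


lemma gp_sym: "gromov_product w y z = gromov_product w z y"
  unfolding gromov_product_def by (simp add: dist_commute)

lemma gp_nonneg: "gromov_product w y z \<ge> 0"
  unfolding gromov_product_def using dist_triangle[of y z w] by (simp add: dist_commute)

lemma gp_le1: "gromov_product w y z \<le> dist w y"
  unfolding gromov_product_def using dist_triangle[of w z y] by (simp add: dist_commute)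

lemma gp_le2: "gromov_product w y z \<le> dist w z"
  unfolding gromov_product_def using dist_triangle[of w y z] by (simp add: dist_commute)

lemma gp_base: "\<bar>gromov_product w y z - gromov_product w' y z\<bar> \<le> dist w w'"
  unfolding gromov_product_def abs_le_iff apply (rule conjI)
  using dist_triangle[of w y w'] dist_triangle[of w' y w] dist_triangle[of w z w'] dist_triangle[of w' z w] dist_commute[of w w']
  by (auto simp: field_simps)

lemma gp_arg1: "\<bar>gromov_product w y z - gromov_product w y' z\<bar> \<le> dist y y'"
  unfolding gromov_product_def abs_le_iff apply (rule conjI)
  using dist_triangle[of w y y'] dist_triangle[of w y' y] dist_triangle[of y z y'] dist_triangle[of y' z y] dist_commute[of y y']
  by (auto simp: field_simps)

lemma gp_arg2: "\<bar>gromov_product w y z - gromov_product w y z'\<bar> \<le> dist z z'"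
  using gp_arg1[of w z y z'] by (simp add: gp_sym)

lemma hyp4:
  assumes "gromov_hyperbolic TYPE('a::metric_space) \<delta>"
  shows "gromov_product (w::'a) a c \<ge> min (gromov_product w a b) (gromov_product w b c) - \<delta>"
  using assms unfolding gromov_hyperbolic_def by blast

lemma hyp_delta_nonneg:
  assumes "gromov_hyperbolic TYPE('a::metric_space) \<delta>"
  shows "\<delta> \<ge> 0"
proof -
  obtain w :: 'a where True by blast
  have "gromov_product w w w \<ge> min (gromov_product w w w) (gromov_product w w w) - \<delta>"
    using hyp4[OF assms] .
  thus ?thesis by simp
qed

lemma gp_between:
  assumes "dist u p + dist p v = dist u v"
  shows "gromov_product u p v = dist u p"
  using assms unfolding gromov_product_def by simp

lemma gp_mono_between:
  assumes "dist u p + dist p z = dist u z"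
  shows "gromov_product u w p \<le> gromov_product u w z"
  using assms dist_triangle[of w z p] unfolding gromov_product_def by (simp add: dist_commute)

lemma fellow_travel:
  assumes H: "gromov_hyperbolic TYPE('a::metric_space) \<delta>"
    and bp: "dist u p + dist p v = dist u (v::'a)"
    and bq: "dist u q + dist q w = dist u w"
    and t: "dist u p = t" "dist u q = t" "t \<le> gromov_product u v w"
  shows "dist p q \<le> 4 * \<delta>"
proof -
  have 1: "gromov_product u p v = t" using gp_between[OF bp] t by simp
  have 2: "gromov_product u w q = t" using gp_between[OF bq] t by (simp add: gp_sym)
  have "gromov_product u p w \<ge> min (gromov_product u p v) (gromov_product u v w) - \<delta>"
    using hyp4[OF H] .
  hence 3: "gromov_product u p w \<ge> t - \<delta>" using 1 t by simp
  have "gromov_product u p q \<ge> min (gromov_product u p w) (gromov_product u w q) - \<delta>"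
    using hyp4[OF H] .
  hence "gromov_product u p q \<ge> t - 2*\<delta>" using 2 3 hyp_delta_nonneg[OF H] by (simp add: min_def split: if_splits)
  thus ?thesis unfolding gromov_product_def using t by simp
qed


definition betw :: "'a::metric_space \<Rightarrow> 'a \<Rightarrow> 'a \<Rightarrow> bool" where
  "betw u p v \<longleftrightarrow> dist u p + dist p v = dist u v"

lemma betw_sym: "betw u p v \<Longrightarrow> betw v p u"
  unfolding betw_def by (simp add: dist_commute)

lemma geo_point:
  assumes G: "geodesic_space TYPE('a::metric_space)" and t: "0 \<le> t" "t \<le> dist u (v::'a)"
  shows "\<exists>p. dist u p = t \<and> betw u p v"
proof -
  obtain \<gamma> :: "real \<Rightarrow> 'a" where g: "\<gamma> 0 = u" "\<gamma> (dist u v) = v"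
    "\<forall>s\<in>{0..dist u v}. \<forall>r\<in>{0..dist u v}. dist (\<gamma> s) (\<gamma> r) = \<bar>s - r\<bar>"
    using G unfolding geodesic_space_def by blast
  have "dist u (\<gamma> t) = t" using g(3)[rule_format, of 0 t] g(1) t by simp
  moreover have "dist (\<gamma> t) v = dist u v - t" using g(3)[rule_format, of t "dist u v"] g(2) t by simp
  ultimately show ?thesis unfolding betw_def by (intro exI[of _ "\<gamma> t"]) simp
qed

lemma gp_sum: "gromov_product y x a + gromov_product x y a = dist x y"
  unfolding gromov_product_def by (simp add: dist_commute field_simps)

lemma lemG:
  assumes H: "gromov_hyperbolic TYPE('a::metric_space) \<delta>" and G: "geodesic_space TYPE('a)"
    and bp: "betw u p (v::'a)" and gp: "gromov_product u v w \<ge> dist u v - \<delta>"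
  shows "\<exists>p'. betw u p' w \<and> dist p p' \<le> 6 * \<delta>"
proof -
  have d0: "\<delta> \<ge> 0" using hyp_delta_nonneg[OF H] .
  define t where "t = dist u p"
  have tD: "t \<le> dist u v" "dist p v = dist u v - t" using bp unfolding betw_def t_def

    using zero_le_dist[of p v] dist_commute[of u p] by linarith+
  have FT: "dist q q' \<le> 4 * \<delta>" if "betw u q v" "dist u q \<le> dist u v - \<delta>" "betw u q' w" "dist u q' = dist u q" for q q'
    using fellow_travel[OF H, of u q v q' w "dist u q"] that gp unfolding betw_def by linarith
  have gw: "gromov_product u v w \<le> dist u w" by (rule gp_le2)
  show ?thesis
  proof (cases "t \<le> dist u v - \<delta>")
    case True
    obtain p' where "dist u p' = t" "betw u p' w" using geo_point[OF G, of t u w] gp gw True t_def by force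
    moreover have "dist p p' \<le> 4 * \<delta>" using FT[OF bp _ \<open>betw u p' w\<close>] True \<open>dist u p' = t\<close> t_def by auto
    ultimately show ?thesis using d0 by auto
  next
    case False
    show ?thesis
    proof (cases "dist u v \<ge> \<delta>")
      case True
      obtain p0 where p0: "dist u p0 = dist u v - \<delta>" "betw u p0 v" using geo_point[OF G, of "dist u v - \<delta>" u v] True d0 by auto
      obtain p' where p': "dist u p' = dist u v - \<delta>" "betw u p' w" using geo_point[OF G, of "dist u v - \<delta>" u w] gp gw True by force
      have "dist p0 p' \<le> 4 * \<delta>" using FT[OF p0(2) _ p'(2)] p0 p' by auto
      moreover have "dist p p0 \<le> 2 * \<delta>"
      proof -
        have "dist p p0 \<le> dist p v + dist v p0" by (rule dist_triangle)
        moreover have "dist v p0 = \<delta>" using p0 unfolding betw_def by (simp add: dist_commute)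
        ultimately show ?thesis using tD False by linarith
      qed
      ultimately have "dist p p' \<le> 6 * \<delta>" using dist_triangle[of p p' p0] by linarith
      thus ?thesis using p' by auto
    next
      case False
      have "betw u u w" unfolding betw_def by simp
      moreover have "dist p u \<le> 6 * \<delta>" using tD False d0 t_def by (simp add: dist_commute)
      ultimately show ?thesis by blast
    qed
  qed
qed

lemma QF:
  assumes H: "gromov_hyperbolic TYPE('a::metric_space) \<delta>" and G: "geodesic_space TYPE('a)"
    and h1: "gromov_product x a y \<le> \<delta>" and h2: "gromov_product y a b \<le> \<delta>"
    and bp: "betw x p (y::'a)"
  shows "\<exists>q. betw a q b \<and> dist p q \<le> 12 * \<delta>"
proof -
  have "gromov_product y x a \<ge> dist y x - \<delta>" using gp_sum[of y x a] h1 by (simp add: gp_sym dist_commute)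
  then obtain p' where p': "betw y p' a" "dist p p' \<le> 6 * \<delta>" using lemG[OF H G betw_sym[OF bp]] by blast
  have "gromov_product a y b \<ge> dist a y - \<delta>" using gp_sum[of a y b] h2 by (simp add: gp_sym dist_commute)
  then obtain q where q: "betw a q b" "dist p' q \<le> 6 * \<delta>" using lemG[OF H G betw_sym[OF p'(1)]] by blast
  show ?thesis using p' q dist_triangle[of p q p'] by (intro exI[of _ q]) auto
qed

lemma seg_near:
  assumes H: "gromov_hyperbolic TYPE('a::metric_space) \<delta>" and bq: "betw a q (b::'a)"
    and g: "\<gamma> 0 = a" "\<gamma> (dist a b) = b"
    "\<forall>s\<in>{0..dist a b}. \<forall>r\<in>{0..dist a b}. dist (\<gamma> s) (\<gamma> r) = \<bar>s - r\<bar>"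
  shows "dist q (\<gamma> (dist a q)) \<le> 4 * \<delta>" "0 \<le> dist a q" "dist a q \<le> dist a b"
proof -
  have le: "dist a q \<le> dist a b" using bq unfolding betw_def by (metis le_add_same_cancel1 zero_le_dist)
  have 1: "dist a (\<gamma> (dist a q)) = dist a q" using g(3)[rule_format, of 0 "dist a q"] g(1) le by simp
  have 2: "dist (\<gamma> (dist a q)) b = dist a b - dist a q" using g(3)[rule_format, of "dist a q" "dist a b"] g(2) le by simp
  have "gromov_product a b b = dist a b" unfolding gromov_product_def by simp
  thus "dist q (\<gamma> (dist a q)) \<le> 4 * \<delta>"
    using fellow_travel[OF H, of a q b "\<gamma> (dist a q)" b "dist a q"] bq 1 2 le unfolding betw_def by simp
  show "0 \<le> dist a q" "dist a q \<le> dist a b" using le by auto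
qed


lemma conv_diag: "conv_infty x s \<Longrightarrow> \<exists>N. \<forall>n\<ge>N. dist x (s n) \<ge> M"
proof -
  assume "conv_infty x s"
  then obtain N where N: "\<forall>n\<ge>N. \<forall>m\<ge>N. gromov_product x (s n) (s m) \<ge> M" unfolding conv_infty_def by blast
  have "gromov_product x (s n) (s n) = dist x (s n)" for n unfolding gromov_product_def by simp
  thus ?thesis using N by metis
qed

lemma class_mem:
  assumes xi: "\<xi> \<in> gromov_boundary x" and s: "s \<in> \<xi>" and phi: "strict_mono \<phi>"
    and d: "\<forall>k. dist (t k) (s (\<phi> k)) \<le> C"
  shows "t \<in> \<xi>"
proof -
  obtain s0 where xi0: "\<xi> = {t. conv_infty x t \<and> equiv_infty x s0 t}" "conv_infty x s0"
    using xi unfolding gromov_boundary_def by blast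
  have cs: "conv_infty x s" and es: "equiv_infty x s0 s" using s xi0 by auto
  have ge: "\<phi> n \<ge> n" for n using seq_suble[OF phi] .
  have "conv_infty x t"
    unfolding conv_infty_def
  proof
    fix M
    obtain N where N: "\<forall>n\<ge>N. \<forall>m\<ge>N. gromov_product x (s n) (s m) \<ge> M + 2*C"
      using cs unfolding conv_infty_def by blast
    have "gromov_product x (t n) (t m) \<ge> M" if "n \<ge> N" "m \<ge> N" for n m
    proof -
      have "gromov_product x (s (\<phi> n)) (s (\<phi> m)) \<ge> M + 2*C" using N ge that le_trans by blast
      moreover have "\<bar>gromov_product x (t n) (t m) - gromov_product x (s (\<phi> n)) (t m)\<bar> \<le> C"
        using gp_arg1[of x "t n" "t m" "s (\<phi> n)"] d by (meson order_trans)
      moreover have "\<bar>gromov_product x (s (\<phi> n)) (t m) - gromov_product x (s (\<phi> n)) (s (\<phi> m))\<bar> \<le> C"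
        using gp_arg2[of x "s (\<phi> n)" "t m" "s (\<phi> m)"] d by (meson order_trans)
      ultimately show ?thesis by (simp add: abs_le_iff)
    qed
    thus "\<exists>N. \<forall>n\<ge>N. \<forall>m\<ge>N. M \<le> gromov_product x (t n) (t m)" by blast
  qed
  moreover have "equiv_infty x s0 t"
    unfolding equiv_infty_def
  proof
    fix M
    obtain N where N: "\<forall>n\<ge>N. \<forall>m\<ge>N. gromov_product x (s0 n) (s m) \<ge> M + C"
      using es unfolding equiv_infty_def by blast
    have "gromov_product x (s0 n) (t m) \<ge> M" if "n \<ge> N" "m \<ge> N" for n m
    proof -
      have "gromov_product x (s0 n) (s (\<phi> m)) \<ge> M + C" using N ge that le_trans by blast
      moreover have "\<bar>gromov_product x (s0 n) (t m) - gromov_product x (s0 n) (s (\<phi> m))\<bar> \<le> C"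
        using gp_arg2[of x "s0 n" "t m" "s (\<phi> m)"] d by (meson order_trans)
      ultimately show ?thesis by (simp add: abs_le_iff)
    qed
    thus "\<exists>N. \<forall>n\<ge>N. \<forall>m\<ge>N. M \<le> gromov_product x (s0 n) (t m)" by blast
  qed
  ultimately show ?thesis using xi0 by blast
qed

lemma class_trans:
  assumes H: "gromov_hyperbolic TYPE('a::metric_space) \<delta>"
    and xi: "\<xi> \<in> gromov_boundary (x::'a)" and s: "s \<in> \<xi>" and ct: "conv_infty x t"
    and st: "\<forall>M. \<exists>N. \<forall>k\<ge>N. \<forall>m\<ge>N. gromov_product x (s k) (t m) \<ge> M"
  shows "t \<in> \<xi>"
proof -
  obtain s0 where xi0: "\<xi> = {t. conv_infty x t \<and> equiv_infty x s0 t}" "conv_infty x s0"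
    using xi unfolding gromov_boundary_def by blast
  have es: "equiv_infty x s0 s" using s xi0 by auto
  have "equiv_infty x s0 t"
    unfolding equiv_infty_def
  proof
    fix M
    obtain N1 where N1: "\<forall>n\<ge>N1. \<forall>m\<ge>N1. gromov_product x (s0 n) (s m) \<ge> M + \<delta>"
      using es unfolding equiv_infty_def by blast
    obtain N2 where N2: "\<forall>k\<ge>N2. \<forall>m\<ge>N2. gromov_product x (s k) (t m) \<ge> M + \<delta>"
      using st by blast
    define N where "N = max N1 N2"
    have "gromov_product x (s0 n) (t m) \<ge> M" if "n \<ge> N" "m \<ge> N" for n m
    proof -
      have "gromov_product x (s0 n) (t m) \<ge> min (gromov_product x (s0 n) (s N)) (gromov_product x (s N) (t m)) - \<delta>"
        by (rule hyp4[OF H])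
      moreover have "gromov_product x (s0 n) (s N) \<ge> M + \<delta>" using N1 that N_def by auto
      moreover have "gromov_product x (s N) (t m) \<ge> M + \<delta>" using N2 that N_def by auto
      ultimately show ?thesis by linarith
    qed
    thus "\<exists>N. \<forall>n\<ge>N. \<forall>m\<ge>N. M \<le> gromov_product x (s0 n) (t m)" by blast
  qed
  thus ?thesis using xi0 ct by blast
qed

lemma line_conv:
  assumes "geodesic_line L" shows "conv_infty x (\<lambda>n. L (real n))" "conv_infty x (\<lambda>n. L (- real n))"
proof -
  have *: "gromov_product x (L (e * real n)) (L (e * real m)) \<ge> min (real n) (real m) - dist x (L 0)"
    if e: "\<bar>e\<bar> = 1" for n m and e :: real
  proof -
    have d: "dist (L s) (L t) = \<bar>s - t\<bar>" for s t using assms unfolding geodesic_line_def by blast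
    have "dist x (L (e * real n)) \<ge> real n - dist x (L 0)"
      using dist_triangle[of "L 0" "L (e * real n)" x] d[of 0 "e * real n"] e by (simp add: abs_mult dist_commute)
    moreover have "dist x (L (e * real m)) \<ge> real m - dist x (L 0)"
      using dist_triangle[of "L 0" "L (e * real m)" x] d[of 0 "e * real m"] e by (simp add: abs_mult dist_commute)
    moreover have "dist (L (e * real n)) (L (e * real m)) = \<bar>real n - real m\<bar>"
      using d e by (simp add: abs_mult right_diff_distrib[symmetric])
    ultimately show ?thesis unfolding gromov_product_def by (simp add: abs_if min_def split: if_splits)
  qed
  show "conv_infty x (\<lambda>n. L (real n))" unfolding conv_infty_def
  proof
    fix M :: real
    obtain N :: nat where "real N \<ge> M + dist x (L 0)" using real_arch_simple by blast
    have "gromov_product x (L (real n)) (L (real m)) \<ge> M" if "n \<ge> N" "m \<ge> N" for n m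
    proof -
      have "min (real n) (real m) \<ge> real N" using that by simp
      moreover have "gromov_product x (L (real n)) (L (real m)) \<ge> min (real n) (real m) - dist x (L 0)" using *[of 1 n m] by simp
      ultimately show ?thesis using \<open>real N \<ge> M + dist x (L 0)\<close> by linarith
    qed
    hence "\<forall>n\<ge>N. \<forall>m\<ge>N. gromov_product x (L (real n)) (L (real m)) \<ge> M" by blast
    thus "\<exists>N. \<forall>n\<ge>N. \<forall>m\<ge>N. M \<le> gromov_product x (L (real n)) (L (real m))" by blast
  qed
  show "conv_infty x (\<lambda>n. L (- real n))" unfolding conv_infty_def
  proof
    fix M :: real
    obtain N :: nat where "real N \<ge> M + dist x (L 0)" using real_arch_simple by blast
    have "gromov_product x (L (- real n)) (L (- real m)) \<ge> M" if "n \<ge> N" "m \<ge> N" for n m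
    proof -
      have "min (real n) (real m) \<ge> real N" using that by simp
      moreover have "gromov_product x (L (- real n)) (L (- real m)) \<ge> min (real n) (real m) - dist x (L 0)" using *[of "-1" n m] by simp
      ultimately show ?thesis using \<open>real N \<ge> M + dist x (L 0)\<close> by linarith
    qed
    hence "\<forall>n\<ge>N. \<forall>m\<ge>N. gromov_product x (L (- real n)) (L (- real m)) \<ge> M" by blast
    thus "\<exists>N. \<forall>n\<ge>N. \<forall>m\<ge>N. M \<le> gromov_product x (L (- real n)) (L (- real m))" by blast
  qed
qed


lemma clip_lip: "\<bar>max 0 (min l (a + s)) - max 0 (min l (a + t))\<bar> \<le> \<bar>s - t\<bar>" for l a s t :: real
  by (auto simp: max_def min_def abs_if)

lemma rat_dense_q: "e > 0 \<Longrightarrow> \<exists>n. \<bar>t - real_of_rat (from_nat n)\<bar> < e"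
proof -
  assume e: "e > 0"
  obtain r where r: "r \<in> \<rat>" "t < r" "r < t + e" using Rats_dense_in_real[of t "t + e"] e by auto
  obtain \<rho> where "r = of_rat \<rho>" using r(1) unfolding Rats_def by blast
  moreover obtain n where "\<rho> = from_nat n" using surj_from_nat by (metis surjD)
  ultimately show ?thesis using r by (intro exI[of _ n]) auto
qed

lemma line_exists:
  fixes x p :: "'a::metric_space"
  assumes H: "gromov_hyperbolic TYPE('a) \<delta>" and P: "proper_space_pred TYPE('a)"
    and seg1: "\<And>n. \<gamma>s n 0 = a n" and seg2: "\<And>n. \<gamma>s n (ell n) = b n"
    and seg4: "\<And>n s r. s \<in> {0..ell n} \<Longrightarrow> r \<in> {0..ell n} \<Longrightarrow> dist (\<gamma>s n s) (\<gamma>s n r) = \<bar>s - r\<bar>"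
    and u: "\<And>n. 0 \<le> u n \<and> u n \<le> ell n \<and> dist (\<gamma>s n (u n)) x \<le> C"
    and v: "\<And>n. 0 \<le> v n \<and> v n \<le> ell n \<and> dist (\<gamma>s n (v n)) p \<le> C"
    and ca: "conv_infty x a" and cb: "conv_infty x b"
  shows "\<exists>L. geodesic_line L \<and> (\<exists>t. dist (L t) p \<le> C) \<and>
     (\<forall>M. \<exists>N. \<forall>k\<ge>N. \<forall>m\<ge>N. gromov_product x (b k) (L (real m)) \<ge> M) \<and>
     (\<forall>M. \<exists>N. \<forall>k\<ge>N. \<forall>m\<ge>N. gromov_product x (a k) (L (- real m)) \<ge> M)"
proof -
  have d0: "\<delta> \<ge> 0" using hyp_delta_nonneg[OF H] .
  define c where "c n t = \<gamma>s n (max 0 (min (ell n) (u n + t)))" for n t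
  have clip: "max 0 (min (ell n) (u n + t)) \<in> {0..ell n}" for n t using u[of n] by auto
  have c_lip: "dist (c n s) (c n t) \<le> \<bar>s - t\<bar>" for n s t
    unfolding c_def using seg4[OF clip clip] clip_lip by metis
  have c0: "c n 0 = \<gamma>s n (u n)" for n unfolding c_def using u[of n] by simp
  have cb_in: "c n t \<in> cball x (C + \<bar>t\<bar>)" for n t
  proof -
    have "dist x (c n t) \<le> dist x (c n 0) + dist (c n 0) (c n t)" by (rule dist_triangle)
    thus ?thesis using c_lip[of n 0 t] c0 u[of n] by (simp add: dist_commute)
  qed
  have comp: "compact (cball x R)" for R using P unfolding proper_space_pred_def by blast
  have ua: "u n \<ge> dist x (a n) - C" for n
  proof -
    have "u n = dist (a n) (\<gamma>s n (u n))" using seg4[of 0 n "u n"] seg1 u[of n] by auto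
    thus ?thesis using dist_triangle[of x "a n" "\<gamma>s n (u n)"] u[of n] by (simp add: dist_commute)
  qed
  have ub: "ell n - u n \<ge> dist x (b n) - C" for n
  proof -
    have "ell n - u n = dist (\<gamma>s n (u n)) (b n)" using seg4[of "u n" n "ell n"] seg2 u[of n] by auto
    thus ?thesis using dist_triangle[of x "b n" "\<gamma>s n (u n)"] u[of n] by (simp add: dist_commute)
  qed
  have far: "\<exists>N. \<forall>n\<ge>N. u n \<ge> T \<and> ell n - u n \<ge> T" for T
  proof -
    obtain N1 where N1: "\<forall>n\<ge>N1. dist x (a n) \<ge> T + C" using conv_diag[OF ca] by blast
    obtain N2 where N2: "\<forall>n\<ge>N2. dist x (b n) \<ge> T + C" using conv_diag[OF cb] by blast
    show ?thesis using N1 N2 ua ub by (intro exI[of _ "max N1 N2"]) (smt (verit) max.bounded_iff)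
  qed
  have c_eq: "c n t = \<gamma>s n (u n + t)" if "u n \<ge> T" "ell n - u n \<ge> T" "\<bar>t\<bar> \<le> T" for n t T
  proof -
    have "max 0 (min (ell n) (u n + t)) = u n + t" using that by (auto simp: abs_le_iff max_def min_def)
    thus ?thesis unfolding c_def by simp
  qed
  have c_iso: "dist (c n s) (c n t) = \<bar>s - t\<bar>" if "u n \<ge> T" "ell n - u n \<ge> T" "\<bar>s\<bar> \<le> T" "\<bar>t\<bar> \<le> T" for n s t T
  proof -
    have "0 \<le> u n + s \<and> u n + s \<le> ell n" "0 \<le> u n + t \<and> u n + t \<le> ell n" using that by (auto simp: abs_le_iff)
    thus ?thesis using c_eq[OF that(1,2,3)] c_eq[OF that(1,2,4)] seg4[of "u n + s" n "u n + t"] by simp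
  qed
  define q where "q n = real_of_rat (from_nat n)" for n
  interpret S: subseqs "\<lambda>n s. convergent (\<lambda>k. c (s k) (q n))"
  proof
    fix n and s :: "nat \<Rightarrow> nat" assume "strict_mono s"
    have "\<forall>k. c (s k) (q n) \<in> cball x (C + \<bar>q n\<bar>)" using cb_in by blast
    then obtain l r where "strict_mono (r :: nat \<Rightarrow> nat)" "((\<lambda>k. c (s k) (q n)) \<circ> r) \<longlonglongrightarrow> l"
      using seq_compactE[OF compact_imp_seq_compact[OF comp]] by metis
    thus "\<exists>r'. strict_mono r' \<and> convergent (\<lambda>k. c ((s \<circ> r') k) (q n))"
      unfolding convergent_def by (intro exI[of _ r]) (auto simp: o_def)
  qed
  define \<phi> where "\<phi> = S.diagseq"
  have phi: "strict_mono \<phi>" unfolding \<phi>_def by (rule S.subseq_diagseq)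
  have phige: "\<phi> k \<ge> k" for k using seq_suble[OF phi] .
  have conv_q: "convergent (\<lambda>k. c (\<phi> k) (q n))" for n
  proof -
    have "convergent (\<lambda>k. c ((S.diagseq \<circ> (+) (Suc n)) k) (q n))"
    proof (rule S.diagseq_holds)
      fix r s n assume "strict_mono (r::nat\<Rightarrow>nat)" "convergent (\<lambda>k. c (s k) (q n))"
      thus "convergent (\<lambda>k. c ((s \<circ> r) k) (q n))"
        using convergent_subseq_convergent[of "\<lambda>k. c (s k) (q n)" r] by (simp add: o_def)
    qed
    then obtain l where "(\<lambda>k. c (\<phi> (k + Suc n)) (q n)) \<longlonglongrightarrow> l"
      unfolding convergent_def \<phi>_def by (auto simp: o_def add.commute)
    hence "(\<lambda>k. c (\<phi> k) (q n)) \<longlonglongrightarrow> l" by (rule LIMSEQ_offset)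
    thus ?thesis unfolding convergent_def by blast
  qed
  have cauchy: "Cauchy (\<lambda>k. c (\<phi> k) t)" for t
    unfolding Cauchy_def
  proof (intro allI impI)
    fix e :: real assume e: "e > 0"
    obtain n where n: "\<bar>t - q n\<bar> < e/3" using rat_dense_q[of "e/3" t] e q_def by auto
    obtain M where M: "\<forall>i\<ge>M. \<forall>j\<ge>M. dist (c (\<phi> i) (q n)) (c (\<phi> j) (q n)) < e/3"
      using convergent_Cauchy[OF conv_q[of n]] e unfolding Cauchy_def by (meson divide_pos_pos zero_less_numeral)
    have "dist (c (\<phi> i) t) (c (\<phi> j) t) < e" if "i \<ge> M" "j \<ge> M" for i j
    proof -
      have "dist (c (\<phi> i) t) (c (\<phi> j) t) \<le> dist (c (\<phi> i) t) (c (\<phi> i) (q n)) + dist (c (\<phi> i) (q n)) (c (\<phi> j) t)"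
        by (rule dist_triangle)
      also have "\<dots> \<le> dist (c (\<phi> i) t) (c (\<phi> i) (q n)) + dist (c (\<phi> i) (q n)) (c (\<phi> j) (q n)) + dist (c (\<phi> j) (q n)) (c (\<phi> j) t)"
        using dist_triangle[of "c (\<phi> i) (q n)" "c (\<phi> j) t" "c (\<phi> j) (q n)"] by simp
      also have "\<dots> < e"
      proof -
        have "dist (c (\<phi> i) (q n)) (c (\<phi> j) (q n)) < e/3" using M that by blast
        moreover have "dist (c (\<phi> i) t) (c (\<phi> i) (q n)) \<le> \<bar>t - q n\<bar>" using c_lip by blast
        moreover have "dist (c (\<phi> j) (q n)) (c (\<phi> j) t) \<le> \<bar>t - q n\<bar>" using c_lip[of "\<phi> j" "q n" t] by (simp add: abs_minus_commute)
        ultimately show ?thesis using n by linarith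
      qed
      finally show ?thesis .
    qed
    thus "\<exists>M. \<forall>m\<ge>M. \<forall>n\<ge>M. dist (c (\<phi> m) t) (c (\<phi> n) t) < e" by blast
  qed
  have convt: "convergent (\<lambda>k. c (\<phi> k) t)" for t
  proof -
    have "\<forall>k. c (\<phi> k) t \<in> cball x (C + \<bar>t\<bar>)" using cb_in by blast
    then obtain l r where "strict_mono (r :: nat \<Rightarrow> nat)" "((\<lambda>k. c (\<phi> k) t) \<circ> r) \<longlonglongrightarrow> l"
      using seq_compactE[OF compact_imp_seq_compact[OF comp]] by metis
    thus ?thesis using Cauchy_converges_subseq[OF cauchy] unfolding convergent_def by blast
  qed
  define L where "L t = lim (\<lambda>k. c (\<phi> k) t)" for t
  have Llim: "(\<lambda>k. c (\<phi> k) t) \<longlonglongrightarrow> L t" for t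
    unfolding L_def using convt convergent_LIMSEQ_iff by blast
  have geo: "geodesic_line L"
    unfolding geodesic_line_def
  proof (intro allI)
    fix s t :: real
    define T0 where "T0 = max (abs s) (abs t)"
    obtain N where N: "\<forall>n\<ge>N. u n \<ge> T0 \<and> ell n - u n \<ge> T0" using far by blast
    have lim: "(\<lambda>k. dist (c (\<phi> k) s) (c (\<phi> k) t)) \<longlonglongrightarrow> dist (L s) (L t)"
      by (intro tendsto_intros Llim)
    have ev: "\<forall>k\<ge>N. dist (c (\<phi> k) s) (c (\<phi> k) t) = \<bar>s - t\<bar>"
    proof (intro allI impI)
      fix k assume "k \<ge> N"
      hence "\<phi> k \<ge> N" using phige le_trans by blast
      thus "dist (c (\<phi> k) s) (c (\<phi> k) t) = \<bar>s - t\<bar>" using N c_iso[of T0 "\<phi> k" s t] T0_def by auto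
    qed
    have "dist (L s) (L t) \<le> \<bar>s - t\<bar>" by (rule LIMSEQ_le_const2[OF lim], rule exI[of _ N]) (use ev in simp)
    moreover have "dist (L s) (L t) \<ge> \<bar>s - t\<bar>" by (rule LIMSEQ_le_const[OF lim], rule exI[of _ N]) (use ev in simp)
    ultimately show "dist (L s) (L t) = \<bar>s - t\<bar>" by simp
  qed
  have nearp: "\<exists>t. dist (L t) p \<le> C"
  proof -
    define w where "w n = v n - u n" for n
    have cw: "c n (w n) = \<gamma>s n (v n)" for n
    proof -
      have "max 0 (min (ell n) (u n + w n)) = v n" unfolding w_def using v[of n] by (auto simp: max_def min_def)
      thus ?thesis unfolding c_def by simp
    qed
    have wb: "\<bar>w n\<bar> \<le> 2 * C + dist x p" for n
    proof -
      have "\<bar>w n\<bar> = dist (\<gamma>s n (v n)) (\<gamma>s n (u n))" unfolding w_def using seg4[of "v n" n "u n"] u[of n] v[of n] by auto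
      also have "\<dots> \<le> dist (\<gamma>s n (v n)) p + dist p (\<gamma>s n (u n))" by (rule dist_triangle)
      also have "\<dots> \<le> dist (\<gamma>s n (v n)) p + (dist p x + dist x (\<gamma>s n (u n)))" using dist_triangle[of p "\<gamma>s n (u n)" x] by simp
      finally show ?thesis using u[of n] v[of n] by (simp add: dist_commute)
    qed
    have "\<forall>k. w (\<phi> k) \<in> cball 0 (2 * C + dist x p)" using wb by (simp add: dist_real_def)
    then obtain ts \<psi> where psi: "strict_mono (\<psi> :: nat \<Rightarrow> nat)" "((\<lambda>k. w (\<phi> k)) \<circ> \<psi>) \<longlonglongrightarrow> ts"
      using seq_compactE[OF compact_imp_seq_compact[OF compact_cball]] by metis
    have l1: "(\<lambda>k. dist (c (\<phi> (\<psi> k)) ts) p) \<longlonglongrightarrow> dist (L ts) p"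
      using LIMSEQ_subseq_LIMSEQ[OF Llim psi(1)] by (intro tendsto_intros) (simp add: o_def)
    have l2: "(\<lambda>k. \<bar>ts - w (\<phi> (\<psi> k))\<bar> + C) \<longlonglongrightarrow> \<bar>ts - ts\<bar> + C"
      using psi(2) by (intro tendsto_intros) (simp add: o_def)
    have "dist (c (\<phi> (\<psi> k)) ts) p \<le> \<bar>ts - w (\<phi> (\<psi> k))\<bar> + C" for k
    proof -
      have "dist (c (\<phi> (\<psi> k)) ts) p \<le> dist (c (\<phi> (\<psi> k)) ts) (c (\<phi> (\<psi> k)) (w (\<phi> (\<psi> k)))) + dist (c (\<phi> (\<psi> k)) (w (\<phi> (\<psi> k)))) p"
        by (rule dist_triangle)
      thus ?thesis using c_lip[of "\<phi> (\<psi> k)" ts "w (\<phi> (\<psi> k))"] cw v[of "\<phi> (\<psi> k)"] by simp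
    qed
    hence "dist (L ts) p \<le> \<bar>ts - ts\<bar> + C" using LIMSEQ_le[OF l1 l2] by blast
    thus ?thesis by auto
  qed
  have endb: "\<forall>M. \<exists>N. \<forall>k\<ge>N. \<forall>m\<ge>N. gromov_product x (b k) (L (real m)) \<ge> M"
  proof
    fix M :: real
    obtain N1 where N1: "\<forall>n\<ge>N1. \<forall>m\<ge>N1. gromov_product x (b n) (b m) \<ge> M + \<delta>"
      using cb unfolding conv_infty_def by blast
    obtain N2 :: nat where N2: "real N2 \<ge> M + \<delta> + C" using real_arch_simple by blast
    have "gromov_product x (b k) (L (real m)) \<ge> M" if km: "k \<ge> max N1 N2" "m \<ge> max N1 N2" for k m
    proof -
      have lim: "(\<lambda>j. gromov_product x (b k) (c (\<phi> j) (real m))) \<longlonglongrightarrow> gromov_product x (b k) (L (real m))"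
        unfolding gromov_product_def by (intro tendsto_intros Llim) auto
      obtain N3 where N3: "\<forall>n\<ge>N3. u n \<ge> real m \<and> ell n - u n \<ge> real m" using far by blast
      have "gromov_product x (b k) (c (\<phi> j) (real m)) \<ge> M" if j: "j \<ge> max N1 N3" for j
      proof -
        define n where "n = \<phi> j"
        have nN: "n \<ge> N1" "n \<ge> N3" using phige[of j] j n_def by auto
        have ce: "c n (real m) = \<gamma>s n (u n + real m)" using c_eq[of "real m" n "real m"] N3 nN by auto
        have "dist (b n) (\<gamma>s n (u n + real m)) = ell n - u n - real m"
          using seg4[of "u n + real m" n "ell n"] seg2 N3 nN u[of n] by (auto simp: dist_commute)
        moreover have "dist (\<gamma>s n (u n)) (b n) = ell n - u n" using seg4[of "u n" n "ell n"] seg2 u[of n] by auto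
        moreover have "dist (\<gamma>s n (u n)) (\<gamma>s n (u n + real m)) = real m"
          using seg4[of "u n" n "u n + real m"] N3 nN u[of n] by auto
        moreover note dist_triangle[of "\<gamma>s n (u n)" "b n" x] dist_triangle[of "\<gamma>s n (u n)" "\<gamma>s n (u n + real m)" x] u[of n]
        ultimately have "gromov_product x (b n) (c n (real m)) \<ge> real m - C"
          unfolding gromov_product_def ce by (simp add: dist_commute)
        moreover have "gromov_product x (b k) (b n) \<ge> M + \<delta>" using N1 nN km by auto
        moreover have "gromov_product x (b k) (c n (real m)) \<ge> min (gromov_product x (b k) (b n)) (gromov_product x (b n) (c n (real m))) - \<delta>"
          by (rule hyp4[OF H])
        moreover have "real m \<ge> real N2" using km by simp
        ultimately show ?thesis using N2 unfolding n_def by linarith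
      qed
      thus ?thesis using LIMSEQ_le_const[OF lim] by blast
    qed
    thus "\<exists>N. \<forall>k\<ge>N. \<forall>m\<ge>N. gromov_product x (b k) (L (real m)) \<ge> M" by blast
  qed
  have enda: "\<forall>M. \<exists>N. \<forall>k\<ge>N. \<forall>m\<ge>N. gromov_product x (a k) (L (- real m)) \<ge> M"
  proof
    fix M :: real
    obtain N1 where N1: "\<forall>n\<ge>N1. \<forall>m\<ge>N1. gromov_product x (a n) (a m) \<ge> M + \<delta>"
      using ca unfolding conv_infty_def by blast
    obtain N2 :: nat where N2: "real N2 \<ge> M + \<delta> + C" using real_arch_simple by blast
    have "gromov_product x (a k) (L (- real m)) \<ge> M" if km: "k \<ge> max N1 N2" "m \<ge> max N1 N2" for k m
    proof -
      have lim: "(\<lambda>j. gromov_product x (a k) (c (\<phi> j) (- real m))) \<longlonglongrightarrow> gromov_product x (a k) (L (- real m))"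
        unfolding gromov_product_def by (intro tendsto_intros Llim) auto
      obtain N3 where N3: "\<forall>n\<ge>N3. u n \<ge> real m \<and> ell n - u n \<ge> real m" using far by blast
      have "gromov_product x (a k) (c (\<phi> j) (- real m)) \<ge> M" if j: "j \<ge> max N1 N3" for j
      proof -
        define n where "n = \<phi> j"
        have nN: "n \<ge> N1" "n \<ge> N3" using phige[of j] j n_def by auto
        have ce: "c n (- real m) = \<gamma>s n (u n - real m)" using c_eq[of "real m" n "- real m"] N3 nN by auto
        have "dist (a n) (\<gamma>s n (u n - real m)) = u n - real m"
          using seg4[of 0 n "u n - real m"] seg1 N3 nN u[of n] by auto
        moreover have "dist (\<gamma>s n (u n)) (a n) = u n" using seg4[of "u n" n 0] seg1 u[of n] by auto
        moreover have "dist (\<gamma>s n (u n)) (\<gamma>s n (u n - real m)) = real m"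
          using seg4[of "u n" n "u n - real m"] N3 nN u[of n] by auto
        moreover note dist_triangle[of "\<gamma>s n (u n)" "a n" x] dist_triangle[of "\<gamma>s n (u n)" "\<gamma>s n (u n - real m)" x] u[of n]
        ultimately have "gromov_product x (a n) (c n (- real m)) \<ge> real m - C"
          unfolding gromov_product_def ce by (simp add: dist_commute)
        moreover have "gromov_product x (a k) (a n) \<ge> M + \<delta>" using N1 nN km by auto
        moreover have "gromov_product x (a k) (c n (- real m)) \<ge> min (gromov_product x (a k) (a n)) (gromov_product x (a n) (c n (- real m))) - \<delta>"
          by (rule hyp4[OF H])
        moreover have "real m \<ge> real N2" using km by simp
        ultimately show ?thesis using N2 unfolding n_def by linarith
      qed
      thus ?thesis using LIMSEQ_le_const[OF lim] by blast
    qed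
    thus "\<exists>N. \<forall>k\<ge>N. \<forall>m\<ge>N. gromov_product x (a k) (L (- real m)) \<ge> M" by blast
  qed
  show ?thesis using geo nearp endb enda by blast
qed


lemma dir_subseq:
  assumes "\<forall>n. P n \<or> Q n"
  shows "\<exists>\<phi>. strict_mono (\<phi>::nat\<Rightarrow>nat) \<and> ((\<forall>k. P (\<phi> k)) \<or> (\<forall>k. Q (\<phi> k)))"
proof (cases "infinite {n. P n}")
  case True
  then obtain r :: "nat \<Rightarrow> nat" where "strict_mono r" "\<forall>n. r n \<in> {n. P n}" using infinite_enumerate by blast
  thus ?thesis by auto
next
  case False
  then obtain N where "\<forall>n\<in>{n. P n}. n < N" using finite_nat_set_iff_bounded by blast
  hence N: "\<forall>n\<ge>N. \<not> P n" by force
  have "strict_mono (\<lambda>k. k + N)" by (simp add: strict_mono_def)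
  moreover have "\<forall>k. Q (k + N)" using N assms le_add2 by blast
  ultimately show ?thesis by blast
qed

lemma conv_base: "conv_infty x s \<Longrightarrow> conv_infty y s"
  unfolding conv_infty_def
proof (intro allI)
  fix M assume "\<forall>M. \<exists>N. \<forall>n\<ge>N. \<forall>m\<ge>N. M \<le> gromov_product x (s n) (s m)"
  then obtain N where N: "\<forall>n\<ge>N. \<forall>m\<ge>N. M + dist x y \<le> gromov_product x (s n) (s m)" by blast
  have "M \<le> gromov_product y (s n) (s m)" if "n \<ge> N" "m \<ge> N" for n m
  proof -
    have "M + dist x y \<le> gromov_product x (s n) (s m)" using N that by blast
    thus ?thesis using gp_base[of x "s n" "s m" y] unfolding abs_le_iff by linarith
  qed
  thus "\<exists>N. \<forall>n\<ge>N. \<forall>m\<ge>N. M \<le> gromov_product y (s n) (s m)" by blast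
qed

lemma ends_base:
  assumes "\<forall>M. \<exists>N. \<forall>k\<ge>N. \<forall>m\<ge>N. gromov_product y (s k) (t m) \<ge> M"
  shows "\<forall>M. \<exists>N. \<forall>k\<ge>N. \<forall>m\<ge>N. gromov_product x (s k) (t m) \<ge> M"
proof
  fix M :: real
  obtain N where N: "\<forall>k\<ge>N. \<forall>m\<ge>N. gromov_product y (s k) (t m) \<ge> M + dist x y" using spec[OF assms, of "M + dist x y"] by blast
  have "M \<le> gromov_product x (s n) (t m)" if "n \<ge> N" "m \<ge> N" for n m
  proof -
    have "M + dist x y \<le> gromov_product y (s n) (t m)" using N that by blast
    thus ?thesis using gp_base[of x "s n" "t m" y] unfolding abs_le_iff by linarith
  qed
  thus "\<exists>N. \<forall>k\<ge>N. \<forall>m\<ge>N. gromov_product x (s k) (t m) \<ge> M" by blast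
qed

lemma class_conv: "\<xi> \<in> gromov_boundary x \<Longrightarrow> s \<in> \<xi> \<Longrightarrow> conv_infty x s"
proof -
  assume xi: "\<xi> \<in> gromov_boundary x" and s: "s \<in> \<xi>"
  obtain s0 where "\<xi> = {t. conv_infty x t \<and> equiv_infty x s0 t}" using xi unfolding gromov_boundary_def by blast
  thus ?thesis using s by blast
qed

lemma line_dir:
  assumes L: "geodesic_line (\<sigma>::real \<Rightarrow> 'a::metric_space)"
  shows "gromov_product (\<sigma> t1) (\<sigma> (t1 + real n)) (\<sigma> (t1 - real n)) = 0"
proof -
  have d: "dist (\<sigma> s) (\<sigma> t) = \<bar>s - t\<bar>" for s t using L unfolding geodesic_line_def by blast
  show ?thesis unfolding gromov_product_def using d[of t1 "t1 + real n"] d[of t1 "t1 - real n"] d[of "t1 + real n" "t1 - real n"] by simp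
qed

lemma line_class_shift:
  assumes L: "geodesic_line (\<sigma>::real \<Rightarrow> 'a::metric_space)" and xi: "\<xi> \<in> gromov_boundary x"
    and m: "(\<lambda>n. \<sigma> (e * real n)) \<in> \<xi>" and phi: "strict_mono \<phi>"
  shows "(\<lambda>k. \<sigma> (t1 + e * real (\<phi> k))) \<in> \<xi>"
proof -
  have d: "dist (\<sigma> s) (\<sigma> t) = \<bar>s - t\<bar>" for s t using L unfolding geodesic_line_def by blast
  show ?thesis
    by (rule class_mem[OF xi m phi, of _ "\<bar>t1\<bar>"]) (simp add: d)
qed

lemma hull_elim:
  assumes "y \<in> QC_Hull x C"
  obtains \<sigma> t1 \<xi> \<eta> where "geodesic_line \<sigma>" "y = \<sigma> t1" "\<xi> \<in> C" "(\<lambda>n. \<sigma> (real n)) \<in> \<xi>"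
    "\<eta> \<in> C" "(\<lambda>n. \<sigma> (- real n)) \<in> \<eta>"
proof -
  from assms obtain S where S: "S \<in> {range \<gamma> | \<gamma>. geodesic_line \<gamma> \<and>
      (\<exists>\<xi>\<in>C. (\<lambda>n. \<gamma> (real n)) \<in> \<xi>) \<and> (\<exists>\<eta>\<in>C. (\<lambda>n. \<gamma> (- real n)) \<in> \<eta>)}" "y \<in> S"
    unfolding QC_Hull_def by (rule UnionE)
  from S(1) obtain \<gamma> where g: "S = range \<gamma>" "geodesic_line \<gamma>" "\<exists>\<xi>\<in>C. (\<lambda>n. \<gamma> (real n)) \<in> \<xi>"
    "\<exists>\<eta>\<in>C. (\<lambda>n. \<gamma> (- real n)) \<in> \<eta>" by blast
  from S(2) g(1) obtain t where "y = \<gamma> t" by blast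
  thus ?thesis using that g by blast
qed

lemma hull_elim2:
  assumes "y \<in> QC_Hull x C"
  obtains \<sigma> t1 where "geodesic_line \<sigma>" "y = \<sigma> t1" 
    "\<And>e. \<bar>e\<bar> = 1 \<Longrightarrow> \<exists>\<xi>\<in>C. (\<lambda>n. \<sigma> (e * real n)) \<in> \<xi>"
proof -
  obtain \<sigma> t1 \<xi> \<eta> where *: "geodesic_line \<sigma>" "y = \<sigma> t1" "\<xi> \<in> C" "(\<lambda>n. \<sigma> (real n)) \<in> \<xi>"
    "\<eta> \<in> C" "(\<lambda>n. \<sigma> (- real n)) \<in> \<eta>" using hull_elim[OF assms] by blast
  have "\<exists>\<xi>\<in>C. (\<lambda>n. \<sigma> (e * real n)) \<in> \<xi>" if "\<bar>e\<bar> = 1" for e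
  proof (cases "e = 1")
    case True thus ?thesis using *(3,4) by auto
  next
    case False hence "e = -1" using that by (simp add: abs_if split: if_splits)
    thus ?thesis using *(5,6) by auto
  qed
  thus ?thesis using * that by blast
qed

lemma hull_intro:
  assumes "geodesic_line L" "\<xi> \<in> C" "(\<lambda>n. L (real n)) \<in> \<xi>" "\<eta> \<in> C" "(\<lambda>n. L (- real n)) \<in> \<eta>"
  shows "L t \<in> QC_Hull x C"
proof -
  have "range L \<in> {range \<gamma> | \<gamma>. geodesic_line \<gamma> \<and>
      (\<exists>\<xi>\<in>C. (\<lambda>n. \<gamma> (real n)) \<in> \<xi>) \<and> (\<exists>\<eta>\<in>C. (\<lambda>n. \<gamma> (- real n)) \<in> \<eta>)}"
    using assms by blast
  moreover have "L t \<in> range L" by simp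
  ultimately show ?thesis unfolding QC_Hull_def by (rule UnionI)
qed


lemma dir_choice:
  assumes "\<forall>n. P (1::real) n \<or> P (-1) n"
  shows "\<exists>e \<phi>. \<bar>e\<bar> = 1 \<and> strict_mono (\<phi>::nat\<Rightarrow>nat) \<and> (\<forall>k. P e (\<phi> k))"
proof -
  obtain \<phi> where "strict_mono (\<phi>::nat\<Rightarrow>nat)" and D: "(\<forall>k. P 1 (\<phi> k)) \<or> (\<forall>k. P (-1) (\<phi> k))"
    using dir_subseq[OF assms] by blast
  from D show ?thesis
  proof
    assume "\<forall>k. P 1 (\<phi> k)" thus ?thesis using \<open>strict_mono \<phi>\<close> by (intro exI[of _ 1] exI[of _ \<phi>]) simp
  next
    assume "\<forall>k. P (-1) (\<phi> k)" thus ?thesis using \<open>strict_mono \<phi>\<close> by (intro exI[of _ "-1"] exI[of _ \<phi>]) simp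
  qed
qed

lemma min_le_delta:
  assumes H: "gromov_hyperbolic TYPE('a::metric_space) \<delta>" and z: "gromov_product (w::'a) a b = 0"
  shows "gromov_product w a c \<le> \<delta> \<or> gromov_product w b c \<le> \<delta>"
proof -
  have "gromov_product w a b \<ge> min (gromov_product w a c) (gromov_product w c b) - \<delta>" by (rule hyp4[OF H])
  thus ?thesis using z by (auto simp: gp_sym[of w c b] min_def split: if_splits)
qed

lemma hull_ex:
  assumes "y \<in> QC_Hull x C"
  shows "\<exists>\<sigma> t1. geodesic_line \<sigma> \<and> y = \<sigma> t1 \<and> (\<forall>e. \<bar>e\<bar> = 1 \<longrightarrow> (\<exists>\<xi>\<in>C. (\<lambda>n. \<sigma> (e * real n)) \<in> \<xi>))"
proof -
  obtain \<sigma> t1 \<xi> \<eta> where *: "geodesic_line \<sigma>" "y = \<sigma> t1" "\<xi> \<in> C" "(\<lambda>n. \<sigma> (real n)) \<in> \<xi>"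
    "\<eta> \<in> C" "(\<lambda>n. \<sigma> (- real n)) \<in> \<eta>" by (rule hull_elim[OF assms])
  have "\<exists>\<xi>\<in>C. (\<lambda>n. \<sigma> (e * real n)) \<in> \<xi>" if "\<bar>e\<bar> = 1" for e
  proof (cases "e = 1")
    case True thus ?thesis using *(3,4) by auto
  next
    case False hence "e = -1" using that by (simp add: abs_if split: if_splits)
    thus ?thesis using *(5,6) by auto
  qed
  thus ?thesis using *(1,2) by blast
qed

lemma qconvex:
  fixes x :: "'a::metric_space"
  assumes H: "gromov_hyperbolic TYPE('a) \<delta>" and G: "geodesic_space TYPE('a)"
    and P: "proper_space_pred TYPE('a)" and Cb: "C \<subseteq> gromov_boundary x"
    and y1: "y1 \<in> QC_Hull x C" and y2: "y2 \<in> QC_Hull x C" and bp: "betw y1 p y2"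
  shows "\<exists>z\<in>QC_Hull x C. dist z p \<le> 16 * \<delta>"
proof -
  have d0: "\<delta> \<ge> 0" using hyp_delta_nonneg[OF H] .
  obtain \<sigma> t1 where s: "geodesic_line \<sigma>" "y1 = \<sigma> t1" "\<forall>e. \<bar>e\<bar> = 1 \<longrightarrow> (\<exists>\<xi>\<in>C. (\<lambda>n. \<sigma> (e * real n)) \<in> \<xi>)"
    using hull_ex[OF y1] by (elim exE conjE) simp
  obtain \<gamma> t2 where g: "geodesic_line \<gamma>" "y2 = \<gamma> t2" "\<forall>e. \<bar>e\<bar> = 1 \<longrightarrow> (\<exists>\<xi>\<in>C. (\<lambda>n. \<gamma> (e * real n)) \<in> \<xi>)"
    using hull_ex[OF y2] by (elim exE conjE) simp
  have "\<forall>n. gromov_product y1 (\<sigma> (t1 + 1 * real n)) y2 \<le> \<delta> \<or> gromov_product y1 (\<sigma> (t1 + -1 * real n)) y2 \<le> \<delta>"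
    using min_le_delta[OF H line_dir[OF s(1)]] s(2) by simp
  then obtain e1 \<phi>1 where e1: "\<bar>e1\<bar> = 1" "strict_mono (\<phi>1::nat\<Rightarrow>nat)"
    "\<forall>k. gromov_product y1 (\<sigma> (t1 + e1 * real (\<phi>1 k))) y2 \<le> \<delta>"
    using dir_choice[where P = "\<lambda>e n. gromov_product y1 (\<sigma> (t1 + e * real n)) y2 \<le> \<delta>"] by blast
  define a where "a k = \<sigma> (t1 + e1 * real (\<phi>1 k))" for k
  have "\<forall>k. gromov_product y2 (\<gamma> (t2 + 1 * real (\<phi>1 k))) (a k) \<le> \<delta> \<or> gromov_product y2 (\<gamma> (t2 + -1 * real (\<phi>1 k))) (a k) \<le> \<delta>"
    using min_le_delta[OF H line_dir[OF g(1)]] g(2) by simp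
  then obtain e2 \<phi>2 where e2: "\<bar>e2\<bar> = 1" "strict_mono (\<phi>2::nat\<Rightarrow>nat)"
    "\<forall>k. gromov_product y2 (\<gamma> (t2 + e2 * real (\<phi>1 (\<phi>2 k)))) (a (\<phi>2 k)) \<le> \<delta>"
    using dir_choice[where P = "\<lambda>e k. gromov_product y2 (\<gamma> (t2 + e * real (\<phi>1 k))) (a k) \<le> \<delta>"] by blast
  define \<psi> where "\<psi> = \<phi>1 \<circ> \<phi>2"
  have psi: "strict_mono \<psi>" unfolding \<psi>_def using e1(2) e2(2) by (rule strict_mono_o)
  define a' where "a' j = \<sigma> (t1 + e1 * real (\<psi> j))" for j
  define b' where "b' j = \<gamma> (t2 + e2 * real (\<psi> j))" for j
  have h1: "gromov_product y1 (a' j) y2 \<le> \<delta>" for j using e1(3) unfolding a'_def \<psi>_def by simp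
  have h2: "gromov_product y2 (a' j) (b' j) \<le> \<delta>" for j
    using e2(3)[rule_format, of j] unfolding a'_def b'_def \<psi>_def a_def by (simp add: gp_sym)
  obtain \<xi>a where xa: "\<xi>a \<in> C" "(\<lambda>n. \<sigma> (e1 * real n)) \<in> \<xi>a" using s(3) e1(1) by blast
  obtain \<xi>b where xb: "\<xi>b \<in> C" "(\<lambda>n. \<gamma> (e2 * real n)) \<in> \<xi>b" using g(3) e2(1) by blast
  have a'in: "a' \<in> \<xi>a" unfolding a'_def using line_class_shift[OF s(1) _ xa(2) psi] xa(1) Cb by blast
  have b'in: "b' \<in> \<xi>b" unfolding b'_def using line_class_shift[OF g(1) _ xb(2) psi] xb(1) Cb by blast
  have ca: "conv_infty y1 a'" using conv_base class_conv a'in xa(1) Cb by blast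
  have cb: "conv_infty y1 b'" using conv_base class_conv b'in xb(1) Cb by blast
  have "\<forall>j. \<exists>g. g 0 = a' j \<and> g (dist (a' j) (b' j)) = b' j \<and>
      (\<forall>s\<in>{0..dist (a' j) (b' j)}. \<forall>r\<in>{0..dist (a' j) (b' j)}. dist (g s) (g r) = \<bar>s - r\<bar>)"
    using G unfolding geodesic_space_def by blast
  then obtain \<gamma>s where gs0: "\<forall>j. \<gamma>s j 0 = a' j \<and> \<gamma>s j (dist (a' j) (b' j)) = b' j \<and>
      (\<forall>s\<in>{0..dist (a' j) (b' j)}. \<forall>r\<in>{0..dist (a' j) (b' j)}. dist (\<gamma>s j s) (\<gamma>s j r) = \<bar>s - r\<bar>)"
    by (rule choice[THEN exE])
  hence gs: "\<And>j. \<gamma>s j 0 = a' j" "\<And>j. \<gamma>s j (dist (a' j) (b' j)) = b' j"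
    "\<And>j. \<forall>s\<in>{0..dist (a' j) (b' j)}. \<forall>r\<in>{0..dist (a' j) (b' j)}. dist (\<gamma>s j s) (\<gamma>s j r) = \<bar>s - r\<bar>"
    by auto
  have near: "\<exists>u. 0 \<le> u \<and> u \<le> dist (a' j) (b' j) \<and> dist (\<gamma>s j u) z \<le> 16 * \<delta>" if bz: "betw y1 z y2" for j z
  proof -
    obtain q where q: "betw (a' j) q (b' j)" "dist z q \<le> 12 * \<delta>" using QF[OF H G h1 h2 bz] by blast
    have sn: "dist q (\<gamma>s j (dist (a' j) q)) \<le> 4 * \<delta>" "0 \<le> dist (a' j) q" "dist (a' j) q \<le> dist (a' j) (b' j)"
      using seg_near[OF H q(1) gs(1) gs(2) gs(3)] by auto
    have "dist (\<gamma>s j (dist (a' j) q)) z \<le> 16 * \<delta>" using sn(1) q(2) dist_triangle[of "\<gamma>s j (dist (a' j) q)" z q]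
      by (simp add: dist_commute)
    thus ?thesis using sn by blast
  qed
  have "betw y1 y1 y2" unfolding betw_def by simp
  hence "\<forall>j. \<exists>u. 0 \<le> u \<and> u \<le> dist (a' j) (b' j) \<and> dist (\<gamma>s j u) y1 \<le> 16 * \<delta>" using near by blast
  then obtain u where u0: "\<forall>j. 0 \<le> u j \<and> u j \<le> dist (a' j) (b' j) \<and> dist (\<gamma>s j (u j)) y1 \<le> 16 * \<delta>"
    by (rule choice[THEN exE])
  have u: "\<And>j. 0 \<le> u j \<and> u j \<le> dist (a' j) (b' j) \<and> dist (\<gamma>s j (u j)) y1 \<le> 16 * \<delta>" using u0 by blast
  have "\<forall>j. \<exists>v. 0 \<le> v \<and> v \<le> dist (a' j) (b' j) \<and> dist (\<gamma>s j v) p \<le> 16 * \<delta>" using near[OF bp] by blast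
  then obtain v where v0: "\<forall>j. 0 \<le> v j \<and> v j \<le> dist (a' j) (b' j) \<and> dist (\<gamma>s j (v j)) p \<le> 16 * \<delta>"
    by (rule choice[THEN exE])
  have v: "\<And>j. 0 \<le> v j \<and> v j \<le> dist (a' j) (b' j) \<and> dist (\<gamma>s j (v j)) p \<le> 16 * \<delta>" using v0 by blast
  have "\<exists>L. geodesic_line L \<and> (\<exists>t. dist (L t) p \<le> 16 * \<delta>) \<and>
     (\<forall>M. \<exists>N. \<forall>k\<ge>N. \<forall>m\<ge>N. gromov_product y1 (b' k) (L (real m)) \<ge> M) \<and>
     (\<forall>M. \<exists>N. \<forall>k\<ge>N. \<forall>m\<ge>N. gromov_product y1 (a' k) (L (- real m)) \<ge> M)"
  proof (rule line_exists[OF H P gs(1) gs(2) _ u v ca cb])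
    show "\<And>n s r. s \<in> {0..dist (a' n) (b' n)} \<Longrightarrow> r \<in> {0..dist (a' n) (b' n)} \<Longrightarrow> dist (\<gamma>s n s) (\<gamma>s n r) = \<bar>s - r\<bar>"
      using gs(3) by blast
  qed
  then obtain L where L: "geodesic_line L" "\<exists>t. dist (L t) p \<le> 16 * \<delta>"
    "\<forall>M. \<exists>N. \<forall>k\<ge>N. \<forall>m\<ge>N. gromov_product y1 (b' k) (L (real m)) \<ge> M"
    "\<forall>M. \<exists>N. \<forall>k\<ge>N. \<forall>m\<ge>N. gromov_product y1 (a' k) (L (- real m)) \<ge> M" by blast
  have "(\<lambda>m. L (real m)) \<in> \<xi>b"
    using class_trans[OF H _ b'in line_conv(1)[OF L(1)] ends_base[OF L(3)]] xb(1) Cb by blast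
  moreover have "(\<lambda>m. L (- real m)) \<in> \<xi>a"
    using class_trans[OF H _ a'in line_conv(2)[OF L(1)] ends_base[OF L(4)]] xa(1) Cb by blast
  moreover obtain t where "dist (L t) p \<le> 16 * \<delta>" using L(2) by blast
  ultimately show ?thesis using hull_intro[OF L(1) xb(1) _ xa(1)] by blast
qed


lemma iso_dist: "isometry g \<Longrightarrow> dist (g a) (g b) = dist a b"
  unfolding isometry_def by blast

lemma iso_bij: "isometry g \<Longrightarrow> bij g"
  unfolding isometry_def by blast

lemma iso_inv_r: "isometry g \<Longrightarrow> g (inv g y) = y"
  using iso_bij bij_is_surj surj_f_inv_f by metis

lemma iso_inv_l: "isometry g \<Longrightarrow> inv g (g y) = y"
  using iso_bij bij_is_inj inv_f_f by metis

lemma iso_gp: "isometry g \<Longrightarrow> gromov_product x (g a) (g b) = gromov_product (inv g x) a b"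
proof -
  assume g: "isometry g"
  have "dist x (g a) = dist (inv g x) a" using iso_dist[OF g, of "inv g x" a] iso_inv_r[OF g] by simp
  moreover have "dist x (g b) = dist (inv g x) b" using iso_dist[OF g, of "inv g x" b] iso_inv_r[OF g] by simp
  ultimately show ?thesis unfolding gromov_product_def using iso_dist[OF g, of a b] by simp
qed

lemma conv_iso: "isometry g \<Longrightarrow> conv_infty x s \<Longrightarrow> conv_infty x (g \<circ> s)"
proof -
  assume g: "isometry g" and c: "conv_infty x s"
  have "conv_infty (inv g x) s" using conv_base[OF c] .
  thus ?thesis unfolding conv_infty_def by (simp add: iso_gp[OF g])
qed

lemma equiv_iso: "isometry g \<Longrightarrow> equiv_infty x s t \<Longrightarrow> equiv_infty x (g \<circ> s) (g \<circ> t)"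
proof -
  assume g: "isometry g" and c: "equiv_infty x s t"
  have "\<forall>M. \<exists>N. \<forall>k\<ge>N. \<forall>m\<ge>N. gromov_product x (s k) (t m) \<ge> M" using c unfolding equiv_infty_def by simp
  hence "\<forall>M. \<exists>N. \<forall>k\<ge>N. \<forall>m\<ge>N. gromov_product (inv g x) (s k) (t m) \<ge> M" by (rule ends_base)
  thus ?thesis unfolding equiv_infty_def by (simp add: iso_gp[OF g])
qed

lemma group_iso: "isom_group \<Gamma> \<Longrightarrow> g \<in> \<Gamma> \<Longrightarrow> isometry g"
  unfolding isom_group_def by blast

lemma limit_set_inv:
  assumes Gm: "isom_group \<Gamma>" and g: "g \<in> \<Gamma>" and xi: "\<xi> \<in> limit_set \<Gamma> x"
  shows "\<exists>\<eta>\<in>limit_set \<Gamma> x. \<forall>t\<in>\<xi>. (g \<circ> t) \<in> \<eta>"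
proof -
  have gi: "isometry g" using group_iso[OF Gm g] .
  have xb: "\<xi> \<in> gromov_boundary x" and ex: "\<exists>s\<in>\<xi>. \<forall>n. s n \<in> (\<lambda>g. g x) ` \<Gamma>"
    using xi unfolding limit_set_def by auto
  obtain s0 where s0: "\<xi> = {t. conv_infty x t \<and> equiv_infty x s0 t}" "conv_infty x s0"
    using xb unfolding gromov_boundary_def by blast
  define \<eta> where "\<eta> = {t. conv_infty x t \<and> equiv_infty x (g \<circ> s0) t}"
  have eb: "\<eta> \<in> gromov_boundary x" unfolding \<eta>_def gromov_boundary_def using conv_iso[OF gi s0(2)] by blast
  have mem: "(g \<circ> t) \<in> \<eta>" if "t \<in> \<xi>" for t
    using that s0 conv_iso[OF gi] equiv_iso[OF gi] unfolding \<eta>_def by blast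
  obtain s where s: "s \<in> \<xi>" "\<forall>n. s n \<in> (\<lambda>g. g x) ` \<Gamma>" using ex by blast
  have "\<forall>n. (g \<circ> s) n \<in> (\<lambda>g. g x) ` \<Gamma>"
  proof
    fix n
    obtain h where "h \<in> \<Gamma>" "s n = h x" using s(2) by blast
    moreover have "g \<circ> h \<in> \<Gamma>" using Gm g \<open>h \<in> \<Gamma>\<close> unfolding isom_group_def by blast
    ultimately show "(g \<circ> s) n \<in> (\<lambda>g. g x) ` \<Gamma>" by (metis comp_apply image_eqI)
  qed
  hence "\<eta> \<in> limit_set \<Gamma> x" unfolding limit_set_def using eb mem[OF s(1)] by blast
  thus ?thesis using mem by blast
qed

lemma Y_inv:
  assumes Gm: "isom_group \<Gamma>" and g: "g \<in> \<Gamma>" and y: "y \<in> QC_Hull x (limit_set \<Gamma> x)"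
  shows "g y \<in> QC_Hull x (limit_set \<Gamma> x)"
proof -
  have gi: "isometry g" using group_iso[OF Gm g] .
  obtain \<sigma> t1 \<xi> \<eta> where *: "geodesic_line \<sigma>" "y = \<sigma> t1" "\<xi> \<in> limit_set \<Gamma> x" "(\<lambda>n. \<sigma> (real n)) \<in> \<xi>"
    "\<eta> \<in> limit_set \<Gamma> x" "(\<lambda>n. \<sigma> (- real n)) \<in> \<eta>" by (rule hull_elim[OF y])
  obtain \<xi>' where x': "\<xi>' \<in> limit_set \<Gamma> x" "\<forall>t\<in>\<xi>. (g \<circ> t) \<in> \<xi>'" using limit_set_inv[OF Gm g *(3)] by blast
  obtain \<eta>' where e': "\<eta>' \<in> limit_set \<Gamma> x" "\<forall>t\<in>\<eta>. (g \<circ> t) \<in> \<eta>'" using limit_set_inv[OF Gm g *(5)] by blast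
  have gl: "geodesic_line (g \<circ> \<sigma>)" using *(1) iso_dist[OF gi] unfolding geodesic_line_def by simp
  have 1: "(\<lambda>n. (g \<circ> \<sigma>) (real n)) \<in> \<xi>'" using x'(2) *(4) by (auto simp: o_def)
  have 2: "(\<lambda>n. (g \<circ> \<sigma>) (- real n)) \<in> \<eta>'" using e'(2) *(6) by (auto simp: o_def)
  have "(g \<circ> \<sigma>) t1 \<in> QC_Hull x (limit_set \<Gamma> x)" by (rule hull_intro[OF gl x'(1) 1 e'(1) 2])
  thus ?thesis using *(2) by simp
qed

lemma stab_trivial:
  assumes Gm: "isom_group \<Gamma>" and Dg: "discrete_group \<Gamma>" and Tf: "torsion_free \<Gamma>"
    and g: "g \<in> \<Gamma>" and fx: "g x = x"
  shows "g = id"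
proof -
  have pw: "g ^^ n \<in> \<Gamma> \<and> (g ^^ n) x = x" for n
  proof (induction n)
    case 0 thus ?case using Gm unfolding isom_group_def by (simp add: id_def)
  next
    case (Suc n)
    hence "g \<circ> g ^^ n \<in> \<Gamma>" using Gm g unfolding isom_group_def by blast
    thus ?case using Suc fx by (simp add: o_def)
  qed
  have "range (\<lambda>n. g ^^ n) \<subseteq> {h\<in>\<Gamma>. dist (h x) x \<le> 0}" using pw by auto
  moreover have "finite {h\<in>\<Gamma>. dist (h x) x \<le> 0}" using Dg unfolding discrete_group_def by blast
  ultimately have "finite (range (\<lambda>n. g ^^ n))" by (rule finite_subset)
  hence "\<not> inj (\<lambda>n::nat. g ^^ n)" using finite_imageD infinite_UNIV_nat by blast
  then obtain i j :: nat where ij: "i \<noteq> j" "g ^^ i = g ^^ j" unfolding inj_def by blast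
  obtain a b :: nat where ab: "a < b" "g ^^ a = g ^^ b"
  proof (cases "i < j")
    case True thus ?thesis using that ij by blast
  next
    case False hence "j < i" using ij by simp
    thus ?thesis using that ij by metis
  qed
  have bija: "bij (g ^^ a)" using pw[of a] group_iso[OF Gm] iso_bij by blast
  have "g ^^ b = g ^^ (b - a) \<circ> g ^^ a" using ab(1) funpow_add[of "b - a" a g] by simp
  have "(g ^^ (b - a)) y = y" for y
  proof -
    obtain z where z: "y = (g ^^ a) z" using bija bij_is_surj by (metis surj_f_inv_f)
    have "(g ^^ (b - a)) ((g ^^ a) z) = (g ^^ b) z" using \<open>g ^^ b = g ^^ (b - a) \<circ> g ^^ a\<close> by simp
    thus ?thesis using z ab(2) by simp
  qed
  hence "g ^^ (b - a) = id" by auto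
  moreover have "b - a > 0" using ab(1) by simp
  ultimately show ?thesis using Tf g unfolding torsion_free_def by blast
qed

lemma orbit_inj:
  assumes Gm: "isom_group \<Gamma>" and Dg: "discrete_group \<Gamma>" and Tf: "torsion_free \<Gamma>"
  shows "inj_on (\<lambda>g. g x) \<Gamma>"
proof (rule inj_onI)
  fix g h assume g: "g \<in> \<Gamma>" and h: "h \<in> \<Gamma>" and e: "g x = h x"
  have hi: "isometry h" using group_iso[OF Gm h] .
  have "inv h \<in> \<Gamma>" using Gm h unfolding isom_group_def by blast
  hence k: "inv h \<circ> g \<in> \<Gamma>" using Gm g unfolding isom_group_def by blast
  have "(inv h \<circ> g) x = x" using e iso_inv_l[OF hi] by simp
  hence "inv h \<circ> g = id" using stab_trivial[OF Gm Dg Tf k] by blast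
  hence "h \<circ> (inv h \<circ> g) = h" by simp
  moreover have "h \<circ> (inv h \<circ> g) = g" using iso_inv_r[OF hi] by (auto simp: fun_eq_iff)
  ultimately show "g = h" by simp
qed


lemma shift_lim:
  assumes lim: "((\<lambda>T. h T / T) \<longlongrightarrow> (L::real)) at_top"
  shows "((\<lambda>T. h (T + b) / T) \<longlongrightarrow> L) at_top"
proof -
  have f1: "filterlim (\<lambda>T::real. b + T) at_top at_top"
    by (rule filterlim_tendsto_add_at_top[OF tendsto_const filterlim_ident])
  have l1: "((\<lambda>T. h (b + T) / (b + T)) \<longlongrightarrow> L) at_top"
    using filterlim_compose[OF lim f1] by (simp add: o_def)
  have l2: "((\<lambda>T::real. b / T) \<longlongrightarrow> 0) at_top"
    by (rule tendsto_divide_0[OF tendsto_const filterlim_at_top_imp_at_infinity[OF filterlim_ident]])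
  have "((\<lambda>T. h (b + T) / (b + T) * (1 + b / T)) \<longlongrightarrow> L * (1 + 0)) at_top"
    by (intro tendsto_intros l1 l2)
  moreover have "eventually (\<lambda>T. h (b + T) / (b + T) * (1 + b / T) = h (T + b) / T) at_top"
  proof -
    have "eventually (\<lambda>T::real. T > max 0 (- b)) at_top" by (rule eventually_gt_at_top)
    thus ?thesis
    proof (rule eventually_mono)
      fix T :: real assume "T > max 0 (-b)"
      hence nz: "T \<noteq> 0" "b + T \<noteq> 0" by auto
      hence "1 + b / T = (b + T) / T" by (simp add: field_simps)
      hence "h (b + T) / (b + T) * (1 + b / T) = h (b + T) / T" using nz by simp
      thus "h (b + T) / (b + T) * (1 + b / T) = h (T + b) / T" by (simp add: add.commute)
    qed
  qed
  ultimately have "((\<lambda>T. h (T + b) / T) \<longlongrightarrow> L * (1 + 0)) at_top" by (rule tendsto_cong[THEN iffD1, rotated])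
  thus ?thesis by simp
qed

lemma ln_transfer:
  fixes F G :: "real \<Rightarrow> real"
  assumes lim: "((\<lambda>T. ln (F T) / T) \<longlongrightarrow> L) at_top"
    and Fpos: "\<And>t. t \<ge> 0 \<Longrightarrow> F t \<ge> 1" and K: "K \<ge> 1"
    and bnd: "eventually (\<lambda>T. F (T - a) / K \<le> G T \<and> G T \<le> K * F (T + a)) at_top"
  shows "((\<lambda>T. ln (G T) / T) \<longlongrightarrow> L) at_top"
proof (rule tendsto_sandwich)
  have l0: "((\<lambda>T::real. ln K / T) \<longlongrightarrow> 0) at_top"
    by (rule tendsto_divide_0[OF tendsto_const filterlim_at_top_imp_at_infinity[OF filterlim_ident]])
  show "((\<lambda>T. ln (F (T + - a)) / T - ln K / T) \<longlongrightarrow> L) at_top"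
    using tendsto_diff[OF shift_lim[OF lim, of "-a"] l0] by simp
  show "((\<lambda>T. ln (F (T + a)) / T + ln K / T) \<longlongrightarrow> L) at_top"
    using tendsto_add[OF shift_lim[OF lim, of "a"] l0] by simp
  have ev: "eventually (\<lambda>T. T > \<bar>a\<bar> \<and> F (T - a) / K \<le> G T \<and> G T \<le> K * F (T + a)) at_top"
    using eventually_conj[OF eventually_gt_at_top[of "\<bar>a\<bar>"] bnd] by simp
  show "eventually (\<lambda>T. ln (F (T + - a)) / T - ln K / T \<le> ln (G T) / T) at_top"
    using ev
  proof (rule eventually_mono)
    fix T assume T: "T > \<bar>a\<bar> \<and> F (T - a) / K \<le> G T \<and> G T \<le> K * F (T + a)"
    have F1: "F (T - a) \<ge> 1" using Fpos T by auto
    have q: "F (T - a) / K > 0" using F1 K by simp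
    have Gp: "G T > 0" using T q by linarith
    have "ln (F (T - a) / K) \<le> ln (G T)" using T q Gp by simp
    hence "ln (F (T - a)) - ln K \<le> ln (G T)" using F1 K by (simp add: ln_div)
    hence "(ln (F (T - a)) - ln K) / T \<le> ln (G T) / T" using T by (intro divide_right_mono) auto
    thus "ln (F (T + - a)) / T - ln K / T \<le> ln (G T) / T" by (simp add: diff_divide_distrib)
  qed
  show "eventually (\<lambda>T. ln (G T) / T \<le> ln (F (T + a)) / T + ln K / T) at_top"
    using ev
  proof (rule eventually_mono)
    fix T assume T: "T > \<bar>a\<bar> \<and> F (T - a) / K \<le> G T \<and> G T \<le> K * F (T + a)"
    have F1: "F (T - a) \<ge> 1" using Fpos T by auto
    have F2: "F (T + a) \<ge> 1" using Fpos T by auto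
    have q: "F (T - a) / K > 0" using F1 K by simp
    have Gp: "G T > 0" using T q by linarith
    have q2: "K * F (T + a) > 0" using F2 K by simp
    have "ln (G T) \<le> ln (K * F (T + a))" using T q2 Gp by simp
    hence "ln (G T) \<le> ln K + ln (F (T + a))" using F2 K by (simp add: ln_mult)
    hence "ln (G T) / T \<le> (ln (F (T + a)) + ln K) / T" using T by (intro divide_right_mono) auto
    thus "ln (G T) / T \<le> ln (F (T + a)) / T + ln K / T" by (simp add: add_divide_distrib)
  qed
qed

lemma subadd_iter:
  fixes g :: "real \<Rightarrow> real"
  assumes sub: "\<And>s t. 0 \<le> s \<Longrightarrow> 0 \<le> t \<Longrightarrow> g (s + t) \<le> g s + g t" and T0: "T0 \<ge> 0" and r: "r \<ge> 0"
  shows "g (real k * T0 + r) \<le> real k * g T0 + g r"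
proof (induction k)
  case 0 thus ?case by simp
next
  case (Suc k)
  have "g (real (Suc k) * T0 + r) = g (T0 + (real k * T0 + r))" by (simp add: algebra_simps)
  also have "\<dots> \<le> g T0 + g (real k * T0 + r)" using sub T0 r by simp
  also have "\<dots> \<le> real (Suc k) * g T0 + g r" using Suc by (simp add: algebra_simps)
  finally show ?case .
qed

lemma fekete_real:
  fixes F :: "real \<Rightarrow> real"
  assumes mono: "\<And>s t. 0 \<le> s \<Longrightarrow> s \<le> t \<Longrightarrow> F s \<le> F t"
    and pos: "\<And>t. 0 \<le> t \<Longrightarrow> F t \<ge> 1"
    and sub: "\<And>s t. 0 \<le> s \<Longrightarrow> 0 \<le> t \<Longrightarrow> F (s + t) \<le> F s * F t"
  shows "\<exists>L\<ge>0. ((\<lambda>T. ln (F T) / T) \<longlongrightarrow> L) at_top"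
proof -
  define g where "g t = ln (F t)" for t
  have g0: "g t \<ge> 0" if "t \<ge> 0" for t using pos[OF that] unfolding g_def by simp
  have gm: "g s \<le> g t" if "0 \<le> s" "s \<le> t" for s t
  proof -
    have "F s \<ge> 1" "F t \<ge> 1" using pos that by auto
    thus ?thesis unfolding g_def using mono[OF that] by simp
  qed
  have gs: "g (s + t) \<le> g s + g t" if "0 \<le> s" "0 \<le> t" for s t
  proof -
    have p: "F s \<ge> 1" "F t \<ge> 1" "F (s + t) \<ge> 1" using pos that by auto
    hence "F s * F t > 0" by (simp add: less_le_trans[OF zero_less_one])
    hence "ln (F (s + t)) \<le> ln (F s * F t)" using sub[OF that] p by simp
    moreover have "F s > 0" "F t > 0" using p by (auto intro: less_le_trans[OF zero_less_one])
    hence "ln (F s * F t) = ln (F s) + ln (F t)" by (simp add: ln_mult)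
    ultimately show ?thesis unfolding g_def by simp
  qed
  define S where "S = (\<lambda>T. g T / T) ` {0<..}"
  have Sne: "S \<noteq> {}" unfolding S_def by auto
  have Sge: "v \<ge> 0" if vS: "v \<in> S" for v
  proof -
    obtain T where "T > 0" "v = g T / T" using vS unfolding S_def by auto
    thus ?thesis using g0[of T] by simp
  qed
  have Sbd: "bdd_below S" unfolding bdd_below_def using Sge by blast
  define L where "L = Inf S"
  have L0: "L \<ge> 0" unfolding L_def using Sge Sne by (intro cInf_greatest) auto
  have low: "L \<le> g T / T" if "T > 0" for T
  proof -
    have "g T / T \<in> S" unfolding S_def using that by simp
    thus ?thesis unfolding L_def using Sbd by (rule cInf_lower)
  qed
  have "((\<lambda>T. g T / T) \<longlongrightarrow> L) at_top"
  proof (rule order_tendstoI)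
    fix a assume "a < L"
    have "eventually (\<lambda>T::real. T > 0) at_top" by (rule eventually_gt_at_top)
    thus "eventually (\<lambda>T. a < g T / T) at_top"
    proof (rule eventually_mono)
      fix T :: real assume "T > 0"
      thus "a < g T / T" using low[of T] \<open>a < L\<close> by linarith
    qed
  next
    fix a assume aL: "L < a"
    obtain v where "v \<in> S" "v < (L + a) / 2" using cInf_less_iff[OF Sne Sbd, of "(L + a)/2"] aL unfolding L_def by auto
    then obtain T0 where T0: "T0 > 0" "g T0 / T0 < (L + a) / 2" unfolding S_def by auto
    define e where "e = (a - L) / 2"
    have e: "e > 0" using aL unfolding e_def by simp
    have "eventually (\<lambda>T::real. T > max T0 (g T0 / e)) at_top" by (rule eventually_gt_at_top)
    thus "eventually (\<lambda>T. g T / T < a) at_top"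
    proof (rule eventually_mono)
      fix T assume T: "T > max T0 (g T0 / e)"
      have Tp: "T > 0" using T T0 by simp
      define k where "k = nat \<lfloor>T / T0\<rfloor>"
      have kle: "real k * T0 \<le> T"
      proof -
        have "real k \<le> T / T0" unfolding k_def using Tp T0 by (simp add: of_nat_nat)
        thus ?thesis using T0 by (simp add: pos_le_divide_eq)
      qed
      have kge: "T - real k * T0 < T0"
      proof -
        have "T / T0 < real k + 1" unfolding k_def using Tp T0 by (simp add: of_nat_nat)
        thus ?thesis using T0 by (simp add: divide_less_eq algebra_simps)
      qed
      have "g T = g (real k * T0 + (T - real k * T0))" by simp
      also have "\<dots> \<le> real k * g T0 + g (T - real k * T0)"
        using subadd_iter[of g T0 "T - real k * T0" k] gs T0 kle by simp
      also have "\<dots> \<le> real k * g T0 + g T0" using gm kle kge by simp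
      finally have gT: "g T \<le> (real k + 1) * g T0" by (simp add: algebra_simps)
      have "(real k + 1) * g T0 \<le> (T / T0 + 1) * g T0"
        using g0[of T0] T0 kle by (intro mult_right_mono) (auto simp: pos_le_divide_eq)
      hence "g T / T \<le> (T / T0 + 1) * g T0 / T" using gT Tp by (simp add: divide_right_mono)
      also have "\<dots> = g T0 / T0 + g T0 / T" using Tp T0 by (simp add: field_simps)
      also have "\<dots> < (L + a) / 2 + e"
      proof -
        have "g T0 / T < e" using T e Tp g0[of T0] T0 by (simp add: divide_less_eq mult.commute pos_divide_less_eq)
        thus ?thesis using T0 by linarith
      qed
      also have "\<dots> = a" unfolding e_def by (simp add: field_simps)
      finally show "g T / T < a" .
    qed
  qed
  thus ?thesis using L0 unfolding g_def by blast
qed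


definition Acnt :: "('a::metric_space \<Rightarrow> 'a) set \<Rightarrow> 'a \<Rightarrow> real \<Rightarrow> ('a \<Rightarrow> 'a) set" where
  "Acnt \<Gamma> x T = {g\<in>\<Gamma>. dist (g x) x \<le> T}"

lemma Acnt_finite: "discrete_group \<Gamma> \<Longrightarrow> finite (Acnt \<Gamma> x T)"
  unfolding discrete_group_def Acnt_def by blast

lemma Acnt_mono: "T \<le> T' \<Longrightarrow> Acnt \<Gamma> x T \<subseteq> Acnt \<Gamma> x T'"
  unfolding Acnt_def by auto

lemma card_Acnt_mono: "discrete_group \<Gamma> \<Longrightarrow> T \<le> T' \<Longrightarrow> card (Acnt \<Gamma> x T) \<le> card (Acnt \<Gamma> x T')"
  by (intro card_mono Acnt_finite Acnt_mono)

lemma id_Acnt: "isom_group \<Gamma> \<Longrightarrow> T \<ge> 0 \<Longrightarrow> id \<in> Acnt \<Gamma> x T"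
  unfolding Acnt_def isom_group_def by simp

lemma card_Acnt_pos: "isom_group \<Gamma> \<Longrightarrow> discrete_group \<Gamma> \<Longrightarrow> T \<ge> 0 \<Longrightarrow> card (Acnt \<Gamma> x T) \<ge> 1"
proof -
  assume a: "isom_group \<Gamma>" "discrete_group \<Gamma>" "T \<ge> 0"
  have "Acnt \<Gamma> x T \<noteq> {}" using id_Acnt[OF a(1) a(3)] by blast
  moreover have "finite (Acnt \<Gamma> x T)" using Acnt_finite[OF a(2)] .
  ultimately have "card (Acnt \<Gamma> x T) > 0" by (simp add: card_gt_0_iff)
  thus ?thesis by simp
qed

lemma orbit_card:
  assumes Gm: "isom_group \<Gamma>" and Dg: "discrete_group \<Gamma>" and Tf: "torsion_free \<Gamma>"
  shows "card ((\<lambda>g. g x) ` \<Gamma> \<inter> cball x T) = card (Acnt \<Gamma> x T)"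
proof -
  have "(\<lambda>g. g x) ` \<Gamma> \<inter> cball x T = (\<lambda>g. g x) ` Acnt \<Gamma> x T"
  proof (intro equalityI subsetI)
    fix y assume "y \<in> (\<lambda>g. g x) ` \<Gamma> \<inter> cball x T"
    then obtain g where "g \<in> \<Gamma>" "y = g x" "dist x y \<le> T" by auto
    hence "g \<in> Acnt \<Gamma> x T" unfolding Acnt_def by (simp add: dist_commute)
    thus "y \<in> (\<lambda>g. g x) ` Acnt \<Gamma> x T" using \<open>y = g x\<close> by blast
  next
    fix y assume "y \<in> (\<lambda>g. g x) ` Acnt \<Gamma> x T"
    then obtain g where "g \<in> \<Gamma>" "y = g x" "dist (g x) x \<le> T" unfolding Acnt_def by auto
    thus "y \<in> (\<lambda>g. g x) ` \<Gamma> \<inter> cball x T" by (simp add: dist_commute)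
  qed
  moreover have "Acnt \<Gamma> x T \<subseteq> \<Gamma>" unfolding Acnt_def by blast
  hence "inj_on (\<lambda>g. g x) (Acnt \<Gamma> x T)" by (rule inj_on_subset[OF orbit_inj[OF Gm Dg Tf]])
  ultimately show ?thesis using card_image by metis
qed

lemma inv_comp_dist:
  assumes Gm: "isom_group \<Gamma>" and h: "h \<in> \<Gamma>"
  shows "dist ((inv h \<circ> g) x) x = dist (g x) (h x)"
proof -
  have hi: "isometry h" using group_iso[OF Gm h] .
  have "dist (h (inv h (g x))) (h x) = dist (inv h (g x)) x" by (rule iso_dist[OF hi])
  thus ?thesis using iso_inv_r[OF hi] by simp
qed

lemma inv_comp_in: "isom_group \<Gamma> \<Longrightarrow> h \<in> \<Gamma> \<Longrightarrow> g \<in> \<Gamma> \<Longrightarrow> inv h \<circ> g \<in> \<Gamma>"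
  unfolding isom_group_def by blast

lemma comp_inv_comp: "isom_group \<Gamma> \<Longrightarrow> h \<in> \<Gamma> \<Longrightarrow> h \<circ> (inv h \<circ> g) = g"
proof -
  assume "isom_group \<Gamma>" "h \<in> \<Gamma>"
  hence hi: "isometry h" by (rule group_iso)
  show ?thesis by (rule ext) (simp add: iso_inv_r[OF hi])
qed

lemma submult:
  fixes x :: "'a::metric_space"
  assumes M: "class_M \<delta> D x \<Gamma>" and T: "T \<ge> 0" and S: "S \<ge> 0" and D0: "D \<ge> 0"
  shows "card (Acnt \<Gamma> x (T + S)) \<le> card (Acnt \<Gamma> x (T + (16*\<delta>+D))) * card (Acnt \<Gamma> x (S + (16*\<delta>+D)))"
proof -
  have P: "proper_space_pred TYPE('a)" and G: "geodesic_space TYPE('a)" and H: "gromov_hyperbolic TYPE('a) \<delta>"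
    and Gm: "isom_group \<Gamma>" and Dg: "discrete_group \<Gamma>" and qc: "qc_cocompact \<Gamma> x D"
    and xY: "x \<in> QC_Hull x (limit_set \<Gamma> x)" using M unfolding class_M_def by auto
  have d0: "\<delta> \<ge> 0" using hyp_delta_nonneg[OF H] .
  define c where "c = 16*\<delta>+D"
  have c0: "c \<ge> 0" unfolding c_def using d0 D0 by simp
  have Cb: "limit_set \<Gamma> x \<subseteq> gromov_boundary x" unfolding limit_set_def by auto
  have ex: "\<exists>h\<in>Acnt \<Gamma> x (T + c). inv h \<circ> g \<in> Acnt \<Gamma> x (S + c)" if g: "g \<in> Acnt \<Gamma> x (T + S)" for g
  proof -
    have gG: "g \<in> \<Gamma>" and gd: "dist (g x) x \<le> T + S" using g unfolding Acnt_def by auto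
    show ?thesis
    proof (cases "dist (g x) x \<le> T")
      case True
      have "inv g \<circ> g = id" using iso_inv_l[OF group_iso[OF Gm gG]] by (auto simp: fun_eq_iff)
      moreover have "id \<in> Acnt \<Gamma> x (S + c)" using id_Acnt[OF Gm] S c0 by simp
      moreover have "g \<in> Acnt \<Gamma> x (T + c)" using gG True c0 unfolding Acnt_def by auto
      ultimately show ?thesis by metis
    next
      case False
      obtain p where p: "dist x p = T" "betw x p (g x)" using geo_point[OF G, of T x "g x"] T False
        by (auto simp: dist_commute)
      have gY: "g x \<in> QC_Hull x (limit_set \<Gamma> x)" by (rule Y_inv[OF Gm gG xY])
      obtain z where z: "z \<in> QC_Hull x (limit_set \<Gamma> x)" "dist z p \<le> 16 * \<delta>"
        using qconvex[OF H G P Cb xY gY p(2)] by blast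
      obtain h where h: "h \<in> \<Gamma>" "dist (h x) z \<le> D" using qc xY z(1) unfolding qc_cocompact_def by blast
      have pg: "dist p (g x) = dist x (g x) - T" using p unfolding betw_def by simp
      have "dist (h x) x \<le> dist (h x) z + dist z p + dist p x"
        using dist_triangle[of "h x" x z] dist_triangle[of z x p] by simp
      hence 1: "h \<in> Acnt \<Gamma> x (T + c)" using h z p unfolding Acnt_def c_def by (simp add: dist_commute)
      have "dist (g x) (h x) \<le> dist (g x) p + dist p z + dist z (h x)"
        using dist_triangle[of "g x" "h x" p] dist_triangle[of p "h x" z] by simp
      hence "dist (g x) (h x) \<le> S + c" using pg gd h z unfolding c_def by (simp add: dist_commute)
      hence 2: "inv h \<circ> g \<in> Acnt \<Gamma> x (S + c)" using inv_comp_dist[OF Gm h(1), of g x] inv_comp_in[OF Gm h(1) gG]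
        unfolding Acnt_def by simp
      show ?thesis using 1 2 by blast
    qed
  qed
  have "\<forall>g\<in>Acnt \<Gamma> x (T + S). \<exists>h. h \<in> Acnt \<Gamma> x (T + c) \<and> inv h \<circ> g \<in> Acnt \<Gamma> x (S + c)"
    using ex by blast
  from bchoice[OF this] obtain Hc where Hc: "\<forall>g\<in>Acnt \<Gamma> x (T + S). Hc g \<in> Acnt \<Gamma> x (T + c) \<and> inv (Hc g) \<circ> g \<in> Acnt \<Gamma> x (S + c)"
    by blast
  define \<Phi> where "\<Phi> g = (Hc g, inv (Hc g) \<circ> g)" for g
  have "inj_on \<Phi> (Acnt \<Gamma> x (T + S))"
  proof (rule inj_onI)
    fix g1 g2 assume g1: "g1 \<in> Acnt \<Gamma> x (T + S)" and g2: "g2 \<in> Acnt \<Gamma> x (T + S)" and e: "\<Phi> g1 = \<Phi> g2"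
    have "Hc g1 \<in> \<Gamma>" using Hc g1 unfolding Acnt_def by blast
    hence "g1 = Hc g1 \<circ> (inv (Hc g1) \<circ> g1)" using comp_inv_comp[OF Gm] by metis
    also have "\<dots> = Hc g2 \<circ> (inv (Hc g2) \<circ> g2)"
    proof -
      have "Hc g1 = Hc g2" "inv (Hc g1) \<circ> g1 = inv (Hc g2) \<circ> g2" using e unfolding \<Phi>_def by auto
      thus ?thesis by simp
    qed
    also have "\<dots> = g2" using comp_inv_comp[OF Gm] Hc g2 unfolding Acnt_def by blast
    finally show "g1 = g2" .
  qed
  moreover have "\<Phi> ` Acnt \<Gamma> x (T + S) \<subseteq> Acnt \<Gamma> x (T + c) \<times> Acnt \<Gamma> x (S + c)" using Hc unfolding \<Phi>_def by auto
  moreover have "finite (Acnt \<Gamma> x (T + c) \<times> Acnt \<Gamma> x (S + c))" using Acnt_finite[OF Dg] by simp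
  ultimately have "card (Acnt \<Gamma> x (T + S)) \<le> card (Acnt \<Gamma> x (T + c) \<times> Acnt \<Gamma> x (S + c))"
    by (rule card_inj_on_le)
  thus ?thesis unfolding c_def by (simp add: card_cartesian_product)
qed

lemma growth_limit:
  fixes x :: "'a::metric_space"
  assumes M: "class_M \<delta> D x \<Gamma>" and D0: "D \<ge> 0"
  shows "\<exists>L\<ge>0. ((\<lambda>T. ln (real (card (Acnt \<Gamma> x T))) / T) \<longlongrightarrow> L) at_top"
proof -
  have H: "gromov_hyperbolic TYPE('a) \<delta>" and Gm: "isom_group \<Gamma>" and Dg: "discrete_group \<Gamma>"
    using M unfolding class_M_def by auto
  have d0: "\<delta> \<ge> 0" using hyp_delta_nonneg[OF H] .
  define c where "c = 16*\<delta>+D"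
  have c0: "c \<ge> 0" unfolding c_def using d0 D0 by simp
  define f where "f T = real (card (Acnt \<Gamma> x T))" for T
  have fm: "f s \<le> f t" if "s \<le> t" for s t unfolding f_def using card_Acnt_mono[OF Dg that] by simp
  have fp: "f t \<ge> 1" if "t \<ge> 0" for t unfolding f_def using card_Acnt_pos[OF Gm Dg that] by simp
  have fs: "f (s + t + 2*c) \<le> f (s + 2*c) * f (t + 2*c)" if "s \<ge> 0" "t \<ge> 0" for s t
  proof -
    have "card (Acnt \<Gamma> x ((s + c) + (t + c))) \<le> card (Acnt \<Gamma> x ((s + c) + c)) * card (Acnt \<Gamma> x ((t + c) + c))"
      using submult[OF M _ _ D0, of "s + c" "t + c"] that c0 unfolding c_def by simp
    hence "f ((s + c) + (t + c)) \<le> f ((s + c) + c) * f ((t + c) + c)" unfolding f_def by (simp only: of_nat_mult[symmetric] of_nat_le_iff)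
    thus ?thesis by (simp add: algebra_simps)
  qed
  define F where "F t = f (t + 2*c)" for t
  obtain L where L: "L \<ge> 0" "((\<lambda>T. ln (F T) / T) \<longlongrightarrow> L) at_top"
  proof -
    have "\<exists>L\<ge>0. ((\<lambda>T. ln (F T) / T) \<longlongrightarrow> L) at_top"
    proof (rule fekete_real)
      show "F s \<le> F t" if "0 \<le> s" "s \<le> t" for s t unfolding F_def using fm that by simp
      show "F t \<ge> 1" if "0 \<le> t" for t unfolding F_def using fp that c0 by simp
      show "F (s + t) \<le> F s * F t" if "0 \<le> s" "0 \<le> t" for s t unfolding F_def using fs[OF that] by (simp add: add.assoc)
    qed
    thus ?thesis using that by blast
  qed
  have "((\<lambda>T. ln (f T) / T) \<longlongrightarrow> L) at_top"
  proof (rule ln_transfer[OF L(2), where K=1 and a="2*c"])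
    show "F t \<ge> 1" if "t \<ge> 0" for t unfolding F_def using fp that c0 by simp
    show "eventually (\<lambda>T. F (T - 2*c) / 1 \<le> f T \<and> f T \<le> 1 * F (T + 2*c)) at_top"
      unfolding F_def using fm c0 by simp
  qed simp
  thus ?thesis using L(1) unfolding f_def by blast
qed


lemma cov_upper:
  fixes x :: "'a::metric_space"
  assumes M: "class_M \<delta> D x \<Gamma>" and r: "r > 0"
  shows "\<exists>N::nat. N \<ge> 1 \<and> (\<forall>T. Cov (cball x T \<inter> QC_Hull x (limit_set \<Gamma> x)) r \<le> enat (N * card (Acnt \<Gamma> x (T + D))))"
proof -
  have P: "proper_space_pred TYPE('a)" and Gm: "isom_group \<Gamma>" and Dg: "discrete_group \<Gamma>"
    and qc: "qc_cocompact \<Gamma> x D" and xY: "x \<in> QC_Hull x (limit_set \<Gamma> x)"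
    using M unfolding class_M_def by auto
  define Y where "Y = QC_Hull x (limit_set \<Gamma> x)"
  have "compact (cball x D)" using P unfolding proper_space_pred_def by blast
  moreover have "\<And>c. c \<in> cball x D \<Longrightarrow> open (ball c (r/2))" by simp
  moreover have "cball x D \<subseteq> (\<Union>c\<in>cball x D. ball c (r/2))" using r by auto
  ultimately obtain C0 where C0: "C0 \<subseteq> cball x D" "finite C0" "cball x D \<subseteq> (\<Union>c\<in>C0. ball c (r/2))"
    by (rule compactE_image)
  define N where "N = card C0 + 1"
  have "Cov (cball x T \<inter> Y) r \<le> enat (N * card (Acnt \<Gamma> x (T + D)))" for T
  proof -
    define Z where "Z = cball x T \<inter> Y"
    define A where "A = Acnt \<Gamma> x (T + D)"
    define I where "I = {gc \<in> A \<times> C0. \<exists>z\<in>Z. dist z (fst gc (snd gc)) < r/2}"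
    define pick where "pick gc = (SOME z. z \<in> Z \<and> dist z (fst gc (snd gc)) < r/2)" for gc :: "('a \<Rightarrow> 'a) \<times> 'a"
    have pick: "pick gc \<in> Z \<and> dist (pick gc) (fst gc (snd gc)) < r/2" if "gc \<in> I" for gc
      unfolding pick_def using that unfolding I_def by (metis (mono_tags, lifting) mem_Collect_eq someI_ex)
    define S where "S = pick ` I"
    have fA: "finite A" unfolding A_def by (rule Acnt_finite[OF Dg])
    have fI: "finite I" unfolding I_def using fA C0(2) by simp
    have SZ: "S \<subseteq> Z" unfolding S_def using pick by auto
    have fS: "finite S" unfolding S_def using fI by simp
    have "card S \<le> card I" unfolding S_def using fI by (rule card_image_le)
    also have "\<dots> \<le> card (A \<times> C0)" using fA C0(2) unfolding I_def by (intro card_mono) auto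
    also have "\<dots> = card A * card C0" by (simp add: card_cartesian_product)
    also have "\<dots> \<le> N * card A" unfolding N_def by simp
    finally have cS: "card S \<le> N * card A" .
    have cover: "\<forall>z\<in>Z. \<exists>s\<in>S. dist z s \<le> r"
    proof
      fix y assume yZ: "y \<in> Z"
      hence yY: "y \<in> Y" and yT: "dist x y \<le> T" unfolding Z_def by auto
      obtain h where h: "h \<in> \<Gamma>" "dist (h x) y \<le> D" using qc xY yY unfolding qc_cocompact_def Y_def by blast
      have hi: "isometry h" using group_iso[OF Gm h(1)] .
      have hA: "h \<in> A" unfolding A_def Acnt_def using h yT dist_triangle[of "h x" x y] by (simp add: dist_commute)
      have "dist x (inv h y) = dist (h x) y" using iso_dist[OF hi, of x "inv h y"] iso_inv_r[OF hi] by simp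
      hence "inv h y \<in> cball x D" using h by simp
      then obtain c where c: "c \<in> C0" "dist c (inv h y) < r/2" using C0(3) by auto
      have "dist (h c) y < r/2" using c(2) iso_dist[OF hi, of c "inv h y"] iso_inv_r[OF hi] by simp
      hence I: "(h, c) \<in> I" unfolding I_def using hA c(1) yZ by (auto simp: dist_commute)
      have "dist y (pick (h, c)) \<le> dist y (h c) + dist (h c) (pick (h, c))" by (rule dist_triangle)
      hence "dist y (pick (h, c)) < r" using pick[OF I] \<open>dist (h c) y < r/2\<close> by (simp add: dist_commute)
      moreover have "pick (h, c) \<in> S" unfolding S_def using I by blast
      ultimately show "\<exists>s\<in>S. dist y s \<le> r" by (meson less_imp_le)
    qed
    have "Cov Z r \<le> (if finite S then enat (card S) else \<infinity>)"
      unfolding Cov_def using SZ cover by (intro INF_lower) auto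
    also have "\<dots> \<le> enat (N * card A)" using fS cS by simp
    finally show ?thesis unfolding Z_def A_def .
  qed
  thus ?thesis unfolding Y_def N_def by (intro exI[of _ "card C0 + 1"]) auto
qed

lemma pack_le_cov: "Pack Z r \<le> Cov Z r"
  unfolding Pack_def Cov_def
proof (intro SUP_least INF_greatest)
  fix P S assume P: "P \<in> {S. S \<subseteq> Z \<and> (\<forall>a\<in>S. \<forall>b\<in>S. a \<noteq> b \<longrightarrow> 2 * r < dist a b)}"
    and S: "S \<in> {S. S \<subseteq> Z \<and> (\<forall>z\<in>Z. \<exists>s\<in>S. dist z s \<le> r)}"
  show "(if finite P then enat (card P) else \<infinity>) \<le> (if finite S then enat (card S) else \<infinity>)"
  proof (cases "finite S")
    case False thus ?thesis by simp
  next
    case True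
    have "\<forall>p\<in>P. \<exists>s\<in>S. dist p s \<le> r" using P S by blast
    then obtain \<sigma> where \<sigma>: "\<forall>p\<in>P. \<sigma> p \<in> S \<and> dist p (\<sigma> p) \<le> r" by metis
    have inj: "inj_on \<sigma> P"
    proof (rule inj_onI, rule ccontr)
      fix p q assume pq: "p \<in> P" "q \<in> P" "\<sigma> p = \<sigma> q" "p \<noteq> q"
      have "dist p q \<le> dist p (\<sigma> p) + dist q (\<sigma> q)" using dist_triangle[of p q "\<sigma> p"] pq(3) by (simp add: dist_commute)
      moreover have "dist p (\<sigma> p) \<le> r" "dist q (\<sigma> q) \<le> r" using \<sigma> pq(1,2) by auto
      ultimately have "dist p q \<le> 2 * r" by linarith
      thus False using P pq by force
    qed
    have sub: "\<sigma> ` P \<subseteq> S" using \<sigma> by auto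
    have fP: "finite P" using finite_imageD[OF finite_subset[OF sub True] inj] .
    have "card P \<le> card S" using card_inj_on_le[OF inj sub True] .
    thus ?thesis using fP True by simp
  qed
qed

lemma pack_lower:
  fixes x :: "'a::metric_space"
  assumes M: "class_M \<delta> D x \<Gamma>" and r: "r > 0" and T: "T \<ge> 0"
  shows "\<exists>P. P \<subseteq> cball x T \<inter> QC_Hull x (limit_set \<Gamma> x) \<and> (\<forall>a\<in>P. \<forall>b\<in>P. a \<noteq> b \<longrightarrow> 2 * r < dist a b) \<and>
    finite P \<and> card (Acnt \<Gamma> x T) \<le> card P * card (Acnt \<Gamma> x (2 * r))"
proof -
  have Gm: "isom_group \<Gamma>" and Dg: "discrete_group \<Gamma>" and Tf: "torsion_free \<Gamma>"
    and xY: "x \<in> QC_Hull x (limit_set \<Gamma> x)" using M unfolding class_M_def by auto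
  define A where "A = Acnt \<Gamma> x T"
  define Orb where "Orb = (\<lambda>g. g x) ` A"
  have fA: "finite A" unfolding A_def by (rule Acnt_finite[OF Dg])
  have fO: "finite Orb" unfolding Orb_def using fA by simp
  have OZ: "Orb \<subseteq> cball x T \<inter> QC_Hull x (limit_set \<Gamma> x)"
    unfolding Orb_def A_def Acnt_def using Y_inv[OF Gm _ xY] by (auto simp: dist_commute)
  define sep where "sep P \<longleftrightarrow> (\<forall>a\<in>P. \<forall>b\<in>P. a \<noteq> b \<longrightarrow> 2 * r < dist a b)" for P :: "'a set"
  define Sep where "Sep = {P. P \<subseteq> Orb \<and> sep P}"
  have fSep: "finite Sep" unfolding Sep_def using fO by (rule finite_subset[rotated, OF finite_Pow_iff[THEN iffD2]]) auto
  have eSep: "{} \<in> Sep" unfolding Sep_def sep_def by simp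
  define m where "m = Max (card ` Sep)"
  have "m \<in> card ` Sep" unfolding m_def using fSep eSep by (intro Max_in) auto
  then obtain P where P: "P \<in> Sep" "card P = m" by auto
  have Pmax: "card Q \<le> m" if "Q \<in> Sep" for Q unfolding m_def using fSep that by simp
  have PO: "P \<subseteq> Orb" and sP: "sep P" using P unfolding Sep_def by auto
  have fP: "finite P" using finite_subset[OF PO fO] .
  have near: "\<exists>s\<in>P. dist w s \<le> 2 * r" if w: "w \<in> Orb" for w
  proof (rule ccontr)
    assume "\<not> ?thesis"
    hence far: "\<forall>s\<in>P. dist w s > 2 * r" by auto
    hence oP: "w \<notin> P" using r by fastforce
    have "insert w P \<in> Sep" unfolding Sep_def sep_def using PO w sP far unfolding sep_def
      by (auto simp: dist_commute)
    hence "card (insert w P) \<le> m" by (rule Pmax)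
    thus False using P(2) oP fP by simp
  qed
  define B where "B s = {g\<in>A. dist (g x) s \<le> 2 * r}" for s
  have AB: "A \<subseteq> (\<Union>s\<in>P. B s)"
  proof
    fix g assume "g \<in> A"
    hence "g x \<in> Orb" unfolding Orb_def by simp
    then obtain s where "s \<in> P" "dist (g x) s \<le> 2 * r" using near by blast
    thus "g \<in> (\<Union>s\<in>P. B s)" unfolding B_def using \<open>g \<in> A\<close> by blast
  qed
  have Bc: "card (B s) \<le> card (Acnt \<Gamma> x (2 * r))" if sP': "s \<in> P" for s
  proof -
    have "s \<in> (\<lambda>g. g x) ` A" using sP' PO unfolding Orb_def by auto
    then obtain h where h: "h \<in> A" "s = h x" by auto
    have hG: "h \<in> \<Gamma>" using h unfolding A_def Acnt_def by simp
    have "inj_on (\<lambda>g. inv h \<circ> g) (B s)"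
    proof (rule inj_onI)
      fix g1 g2 assume "inv h \<circ> g1 = inv h \<circ> g2"
      hence "h \<circ> (inv h \<circ> g1) = h \<circ> (inv h \<circ> g2)" by simp
      thus "g1 = g2" using comp_inv_comp[OF Gm hG] by metis
    qed
    moreover have "(\<lambda>g. inv h \<circ> g) ` B s \<subseteq> Acnt \<Gamma> x (2 * r)"
    proof
      fix k assume "k \<in> (\<lambda>g. inv h \<circ> g) ` B s"
      then obtain g where g: "g \<in> B s" "k = inv h \<circ> g" by blast
      have gG: "g \<in> \<Gamma>" using g unfolding B_def A_def Acnt_def by simp
      have "dist (k x) x = dist (g x) (h x)" using inv_comp_dist[OF Gm hG, of g x] g by simp
      thus "k \<in> Acnt \<Gamma> x (2 * r)" using g gG inv_comp_in[OF Gm hG gG] h unfolding B_def Acnt_def by auto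
    qed
    ultimately show ?thesis using Acnt_finite[OF Dg] by (rule card_inj_on_le)
  qed
  have "card A \<le> card (\<Union>s\<in>P. B s)"
    using AB fP fA unfolding B_def by (intro card_mono) auto
  also have "\<dots> \<le> (\<Sum>s\<in>P. card (B s))" using fP by (rule card_UN_le)
  also have "\<dots> \<le> card P * card (Acnt \<Gamma> x (2 * r))" using sum_bounded_above[of P "\<lambda>s. card (B s)"] Bc by simp
  finally show ?thesis using PO OZ sP fP unfolding A_def sep_def by blast
qed

lemma pack_ge: "P \<subseteq> Z \<Longrightarrow> (\<forall>a\<in>P. \<forall>b\<in>P. a \<noteq> b \<longrightarrow> 2 * r < dist a b) \<Longrightarrow> finite P \<Longrightarrow> enat (card P) \<le> Pack Z r"
  unfolding Pack_def by (rule SUP_upper2[of P]) auto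


lemma enat_le_fin: "e \<le> enat n \<Longrightarrow> e \<noteq> \<infinity> \<and> the_enat e \<le> n"
  by (cases e) auto

lemma enat_ge_fin: "enat k \<le> e \<Longrightarrow> e \<noteq> \<infinity> \<Longrightarrow> k \<le> the_enat e"
  by (cases e) auto

lemma the_enat_mono': "a \<le> b \<Longrightarrow> b \<noteq> \<infinity> \<Longrightarrow> the_enat a \<le> the_enat b"
  by (cases a; cases b) auto

theorem mainTheorem14:
  fixes \<delta> D :: real and x :: "'a::metric_space" and \<Gamma> :: "('a \<Rightarrow> 'a) set"
  assumes "\<delta> \<ge> 0" "D \<ge> 0" "class_M \<delta> D x \<Gamma>"
  defines "Y \<equiv> QC_Hull x (limit_set \<Gamma> x)"
  shows "crit_exp \<Gamma> x \<noteq> \<infinity> \<and> crit_exp \<Gamma> x \<noteq> - \<infinity> \<and>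
    (\<forall>r>0. (\<forall>T. Cov (cball x T \<inter> Y) r \<noteq> \<infinity> \<and> Pack (cball x T \<inter> Y) r \<noteq> \<infinity>) \<and>
      ((\<lambda>T. ereal (ln (real (the_enat (Cov (cball x T \<inter> Y) r))) / T)) \<longlongrightarrow> crit_exp \<Gamma> x) at_top \<and>
      ((\<lambda>T. ereal (ln (real (the_enat (Pack (cball x T \<inter> Y) r))) / T)) \<longlongrightarrow> crit_exp \<Gamma> x) at_top)"
proof -
  have M: "class_M \<delta> D x \<Gamma>" using assms(3) .
  have D0: "D \<ge> 0" using assms(2) .
  have Gm: "isom_group \<Gamma>" and Dg: "discrete_group \<Gamma>" and Tf: "torsion_free \<Gamma>"
    using M unfolding class_M_def by auto
  obtain L where L: "L \<ge> 0" "((\<lambda>T. ln (real (card (Acnt \<Gamma> x T))) / T) \<longlongrightarrow> L) at_top"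
    using growth_limit[OF M D0] by blast
  define f where "f T = real (card (Acnt \<Gamma> x T))" for T
  have fl: "((\<lambda>T. ln (f T) / T) \<longlongrightarrow> L) at_top" using L(2) unfolding f_def .
  have fp: "f t \<ge> 1" if "t \<ge> 0" for t unfolding f_def using card_Acnt_pos[OF Gm Dg that] by simp
  have fm: "f s \<le> f t" if "s \<le> t" for s t unfolding f_def using card_Acnt_mono[OF Dg that] by simp
  have ce: "crit_exp \<Gamma> x = ereal L"
  proof -
    have "crit_exp \<Gamma> x = Limsup at_top (\<lambda>T::real. ereal (ln (real (card (Acnt \<Gamma> x T))) / T))"
      unfolding crit_exp_def by (simp add: orbit_card[OF Gm Dg Tf])
    also have "\<dots> = ereal L"
      by (rule lim_imp_Limsup[OF trivial_limit_at_top_linorder tendsto_ereal[OF L(2)]])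
    finally show ?thesis .
  qed
  have main: "(\<forall>T. Cov (cball x T \<inter> Y) r \<noteq> \<infinity> \<and> Pack (cball x T \<inter> Y) r \<noteq> \<infinity>) \<and>
      ((\<lambda>T. ereal (ln (real (the_enat (Cov (cball x T \<inter> Y) r))) / T)) \<longlongrightarrow> ereal L) at_top \<and>
      ((\<lambda>T. ereal (ln (real (the_enat (Pack (cball x T \<inter> Y) r))) / T)) \<longlongrightarrow> ereal L) at_top" if r: "r > 0" for r
  proof -
    obtain N :: nat where N: "N \<ge> 1" "\<And>T. Cov (cball x T \<inter> Y) r \<le> enat (N * card (Acnt \<Gamma> x (T + D)))"
      using cov_upper[OF M r] unfolding Y_def by blast
    have cfin: "Cov (cball x T \<inter> Y) r \<noteq> \<infinity>" and cle: "the_enat (Cov (cball x T \<inter> Y) r) \<le> N * card (Acnt \<Gamma> x (T + D))" for T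
      using enat_le_fin[OF N(2)[of T]] by auto
    have pfin: "Pack (cball x T \<inter> Y) r \<noteq> \<infinity>" for T
    proof
      assume "Pack (cball x T \<inter> Y) r = \<infinity>"
      hence "Cov (cball x T \<inter> Y) r = \<infinity>" using pack_le_cov[of "cball x T \<inter> Y" r] by (simp add: top_unique[symmetric])
      thus False using cfin[of T] by simp
    qed
    have pc: "the_enat (Pack (cball x T \<inter> Y) r) \<le> the_enat (Cov (cball x T \<inter> Y) r)" for T
      using the_enat_mono'[OF pack_le_cov cfin] .
    have pcr: "real (the_enat (Pack (cball x T \<inter> Y) r)) \<le> real (the_enat (Cov (cball x T \<inter> Y) r))" for T
      using pc[of T] by simp
    have pc2: "\<And>T. 0 \<le> T \<Longrightarrow> the_enat (Pack (cball x T \<inter> Y) r) \<le> the_enat (Cov (cball x T \<inter> Y) r)" using pc by blast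
    define K where "K = real (max N (card (Acnt \<Gamma> x (2 * r))))"
    have K1: "K \<ge> 1" unfolding K_def using N(1) by simp
    have K2: "f (2 * r) \<le> K" unfolding K_def f_def by simp
    have KN: "real N \<le> K" unfolding K_def by simp
    have plow: "f T / f (2 * r) \<le> real (the_enat (Pack (cball x T \<inter> Y) r))" if T: "T \<ge> 0" for T
    proof -
      obtain P where P: "P \<subseteq> cball x T \<inter> Y" "\<forall>a\<in>P. \<forall>b\<in>P. a \<noteq> b \<longrightarrow> 2 * r < dist a b" "finite P"
        "card (Acnt \<Gamma> x T) \<le> card P * card (Acnt \<Gamma> x (2 * r))" using pack_lower[OF M r T] unfolding Y_def by blast
      have "card P \<le> the_enat (Pack (cball x T \<inter> Y) r)" using enat_ge_fin[OF pack_ge[OF P(1-3)] pfin] .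
      moreover have "f T \<le> real (card P) * f (2 * r)" using P(4) unfolding f_def by (simp only: of_nat_mult[symmetric] of_nat_le_iff)
      moreover have "f (2 * r) > 0" using fp[of "2 * r"] r by simp
      ultimately show ?thesis by (simp add: divide_le_eq) (smt (verit) of_nat_le_iff mult_right_mono)
    qed
    have bnd: "eventually (\<lambda>T. f (T - D) / K \<le> G T \<and> G T \<le> K * f (T + D)) at_top"
      if G: "\<And>T. T \<ge> 0 \<Longrightarrow> real (the_enat (Pack (cball x T \<inter> Y) r)) \<le> G T \<and> G T \<le> real (the_enat (Cov (cball x T \<inter> Y) r))" for G
    proof -
      have "eventually (\<lambda>T::real. T \<ge> 0) at_top" by (rule eventually_ge_at_top)
      thus ?thesis
      proof (rule eventually_mono)
        fix T :: real assume T: "T \<ge> 0"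
        have f2: "f (2 * r) \<ge> 1" using fp r by simp
        have "f (T - D) / K \<le> f T / K" using fm[of "T - D" T] D0 K1 by (simp add: divide_right_mono)
        also have "\<dots> \<le> f T / f (2 * r)" using K2 f2 fp[OF T] by (intro divide_left_mono) auto
        also have "\<dots> \<le> G T" using plow[OF T] G[OF T] by linarith
        finally have 1: "f (T - D) / K \<le> G T" .
        have "G T \<le> real (the_enat (Cov (cball x T \<inter> Y) r))" using G[OF T] by simp
        also have "\<dots> \<le> real N * f (T + D)" using cle[of T] unfolding f_def by (simp only: of_nat_mult[symmetric] of_nat_le_iff)
        also have "\<dots> \<le> K * f (T + D)" using KN fp[of "T + D"] T D0 by (intro mult_right_mono) auto
        finally show "f (T - D) / K \<le> G T \<and> G T \<le> K * f (T + D)" using 1 by simp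
      qed
    qed
    have "((\<lambda>T. ln (real (the_enat (Cov (cball x T \<inter> Y) r))) / T) \<longlongrightarrow> L) at_top"
      by (rule ln_transfer[OF fl fp K1 bnd]) (auto intro: pc2)
    moreover have "((\<lambda>T. ln (real (the_enat (Pack (cball x T \<inter> Y) r))) / T) \<longlongrightarrow> L) at_top"
      by (rule ln_transfer[OF fl fp K1 bnd]) (auto intro: pc2)
    ultimately show ?thesis using cfin pfin by (auto intro: tendsto_ereal)
  qed
  show ?thesis using main unfolding ce by simp
qed


end
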